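(* Let $\Gamma$ be a distance-regular graph with diameter $D\ge 3$, valency $k$ and $a_1\neq 0$. Let $\sigma_0,\sigma_1,\dots,\sigma_D$ and $\varepsilon$ be real numbers with $\sigma_0=1$; write $\sigma=\sigma_1$. Consider the following conditions. Condition A: $\varepsilon\neq -1$, and for $1\le i\le D-1$, $$a_i=g\,\frac{(\sigma_{i+1}-\sigma\sigma_i)(\sigma_{i-1}-\sigma\sigma_i)}{(\sigma_{i+1}-\sigma_i)(\sigma_{i-1}-\sigma_i)},\qquad g=\frac{(\varepsilon-1)(1-\sigma_2)}{(\sigma^2-\sigma_2)(1-\varepsilon\sigma)},$$ with all denominators appearing here nonzero. Condition B: for $1\le i\le D-1$, $$b_i(\sigma_{i-1}-\sigma_{i+1})=h\,\frac{(\sigma_{i-1}-\sigma\sigma_i)(\sigma_{i+1}-\varepsilon\sigma_i)}{\sigma_{i+1}-\sigma_i},\qquad h=\frac{(1-\sigma)(1-\sigma_2)}{(\sigma^2-\sigma_2)(1-\varepsilon\sigma)},$$ with all denominators appearing here nonzero. Condition C: $k=h\dfrac{\sigma-\varepsilon}{\sigma-1}$ and for $1\le i\le D-1$, $$c_i(\sigma_{i+1}-\sigma_{i-1})=h\,\frac{(\sigma_{i+1}-\sigma\sigma_i)(\sigma_{i-1}-\varepsilon\sigma_i)}{\sigma_{i-1}-\sigma_i},$$ with $h$ as in Condition B, and all denominators appearing here (including that of $h$) nonzero. Then the following are equivalent: (i) $\sigma_0,\dots,\sigma_D$ is a tight nontrivial pseudo cosine sequence and $\varepsilon$ is its auxiliary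 parameter; (ii) $\sigma_0,\dots,\sigma_D$ is a nontrivial pseudo cosine sequence and $\sigma_0,\dots,\sigma_D,\varepsilon$ satisfy Condition A; (iii) $\sigma_0,\dots,\sigma_D,\varepsilon$ satisfy both Condition A and Condition B; (iv) $\sigma_0,\dots,\sigma_D,\varepsilon$ satisfy both Condition A and Condition C.
   Context: $\Gamma$ is a finite connected undirected graph without loops or multiple edges, distance-regular with diameter $D$, intersection numbers $a_i,b_i,c_i$ ($c_0=0$, $b_D=0$, $c_1=1$), valency $k=b_0$, $c_i+a_i+b_i=k$. For $\theta\in\mathbb{R}$ the pseudo cosine sequence for $\theta$ is the sequence of reals $\sigma_0,\dots,\sigma_D$ with $\sigma_0=1$ and $c_i\sigma_{i-1}+a_i\sigma_i+b_i\sigma_{i+1}=\theta\sigma_i$ for $0\le i\le D-1$; then $\theta=k\sigma_1$. The trivial pseudo cosine sequence is the one for $\theta=k$ (all terms equal $1$); a pseudo cosine sequence is nontrivial if $\sigma_1\neq 1$. Pseudo cosine sequences $\sigma_i$, $\rho_i$ form a tight pair if $(\sigma_i\rho_i)_{i=0}^D$ is a pseudo cosine sequence. For a tight pair of nontrivial pseudo cosine sequences, an auxiliary parameter is a real $\varepsilon$ with $\sigma_i\rho_i-\sigma_{i-1}\rho_{i-1}=\varepsilon(\sigma_{i-1}\rho_i-\sigma_i\rho_{i-1})$ for $1\le i\le D$. When $a_1\neq0$, a nontrivial pseudo cosine sequence $\sigma_0,\dots,\sigma_D$ is called tight if there exists a nontrivial pseudo cosine sequence $\rho_0,\dots,\rho_D$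 such that the two form a tight pair; the auxiliary parameter of $\sigma_0,\dots,\sigma_D$ is the auxiliary parameter of this tight pair (which is uniquely determined in this situation). *)

theory Defs
  imports Complex_Main
begin

definition simple_graph :: "'a set \<Rightarrow> ('a \<Rightarrow> 'a \<Rightarrow> bool) \<Rightarrow> bool" where
  "simple_graph V E \<longleftrightarrow> finite V \<and> V \<noteq> {} \<and>
     (\<forall>x y. E x y \<longrightarrow> x \<in> V \<and> y \<in> V) \<and>
     (\<forall>x y. E x y \<longrightarrow> E y x) \<and> (\<forall>x. \<not> E x x)"

definition adj_rel :: "('a \<Rightarrow> 'a \<Rightarrow> bool) \<Rightarrow> ('a \<times> 'a) set" where
  "adj_rel E = {(x, y). E x y}"

definition graph_connected :: "'a set \<Rightarrow> ('a \<Rightarrow> 'a \<Rightarrow> bool) \<Rightarrow> bool" where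
  "graph_connected V E \<longleftrightarrow> (\<forall>x\<in>V. \<forall>y\<in>V. \<exists>n. (x, y) \<in> adj_rel E ^^ n)"

definition gdist :: "('a \<Rightarrow> 'a \<Rightarrow> bool) \<Rightarrow> 'a \<Rightarrow> 'a \<Rightarrow> nat" where
  "gdist E x y = (LEAST n. (x, y) \<in> adj_rel E ^^ n)"

definition diameter :: "'a set \<Rightarrow> ('a \<Rightarrow> 'a \<Rightarrow> bool) \<Rightarrow> nat" where
  "diameter V E = Max {gdist E x y | x y. x \<in> V \<and> y \<in> V}"

text \<open>Distance-regular graph with intersection numbers a, b, c: a finite connected
simple graph such that for all vertices x, y at distance i, the number of neighbours
z of y at distance i-1, i, i+1 from x equals c i, a i, b i respectively.
(For i = 0 the count c 0 is automatically 0.) The values of a, b, c at indices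
beyond the diameter are irrelevant.\<close>
definition distance_regular ::
  "'a set \<Rightarrow> ('a \<Rightarrow> 'a \<Rightarrow> bool) \<Rightarrow> (nat \<Rightarrow> nat) \<Rightarrow> (nat \<Rightarrow> nat) \<Rightarrow> (nat \<Rightarrow> nat) \<Rightarrow> bool" where
  "distance_regular V E a b c \<longleftrightarrow> simple_graph V E \<and> graph_connected V E \<and>
     (\<forall>x\<in>V. \<forall>y\<in>V.
        c (gdist E x y) = card {z \<in> V. E y z \<and> gdist E x z + 1 = gdist E x y} \<and>
        a (gdist E x y) = card {z \<in> V. E y z \<and> gdist E x z = gdist E x y} \<and>
        b (gdist E x y) = card {z \<in> V. E y z \<and> gdist E x z = gdist E x y + 1})"

definition pseudo_cosine_for ::
  "(nat \<Rightarrow> nat) \<Rightarrow> (nat \<Rightarrow> nat) \<Rightarrow> (nat \<Rightarrow> nat) \<Rightarrow> nat \<Rightarrow> real \<Rightarrow> (nat \<Rightarrow> real) \<Rightarrow> bool" where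
  "pseudo_cosine_for a b c D \<theta> \<sigma> \<longleftrightarrow> \<sigma> 0 = 1 \<and>
     (\<forall>i<D. real (c i) * (if i = 0 then 0 else \<sigma> (i - 1)) + real (a i) * \<sigma> i
             + real (b i) * \<sigma> (i + 1) = \<theta> * \<sigma> i)"

definition pseudo_cosine ::
  "(nat \<Rightarrow> nat) \<Rightarrow> (nat \<Rightarrow> nat) \<Rightarrow> (nat \<Rightarrow> nat) \<Rightarrow> nat \<Rightarrow> (nat \<Rightarrow> real) \<Rightarrow> bool" where
  "pseudo_cosine a b c D \<sigma> \<longleftrightarrow> (\<exists>\<theta>. pseudo_cosine_for a b c D \<theta> \<sigma>)"

definition nontrivial_pseudo_cosine ::
  "(nat \<Rightarrow> nat) \<Rightarrow> (nat \<Rightarrow> nat) \<Rightarrow> (nat \<Rightarrow> nat) \<Rightarrow> nat \<Rightarrow> (nat \<Rightarrow> real) \<Rightarrow> bool" where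
  "nontrivial_pseudo_cosine a b c D \<sigma> \<longleftrightarrow> pseudo_cosine a b c D \<sigma> \<and> \<sigma> 1 \<noteq> 1"

definition tight_pair ::
  "(nat \<Rightarrow> nat) \<Rightarrow> (nat \<Rightarrow> nat) \<Rightarrow> (nat \<Rightarrow> nat) \<Rightarrow> nat \<Rightarrow> (nat \<Rightarrow> real) \<Rightarrow> (nat \<Rightarrow> real) \<Rightarrow> bool" where
  "tight_pair a b c D \<sigma> \<rho> \<longleftrightarrow> pseudo_cosine a b c D \<sigma> \<and> pseudo_cosine a b c D \<rho> \<and>
     pseudo_cosine a b c D (\<lambda>i. \<sigma> i * \<rho> i)"

definition auxiliary_parameter :: "nat \<Rightarrow> (nat \<Rightarrow> real) \<Rightarrow> (nat \<Rightarrow> real) \<Rightarrow> real \<Rightarrow> bool" where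
  "auxiliary_parameter D \<sigma> \<rho> \<epsilon> \<longleftrightarrow>
     (\<forall>i\<in>{1..D}. \<sigma> i * \<rho> i - \<sigma> (i - 1) * \<rho> (i - 1)
                  = \<epsilon> * (\<sigma> (i - 1) * \<rho> i - \<sigma> i * \<rho> (i - 1)))"

definition tight_with_aux ::
  "(nat \<Rightarrow> nat) \<Rightarrow> (nat \<Rightarrow> nat) \<Rightarrow> (nat \<Rightarrow> nat) \<Rightarrow> nat \<Rightarrow> (nat \<Rightarrow> real) \<Rightarrow> real \<Rightarrow> bool" where
  "tight_with_aux a b c D \<sigma> \<epsilon> \<longleftrightarrow> nontrivial_pseudo_cosine a b c D \<sigma> \<and>
     (\<exists>\<rho>. nontrivial_pseudo_cosine a b c D \<rho> \<and> tight_pair a b c D \<sigma> \<rho> \<and>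
          auxiliary_parameter D \<sigma> \<rho> \<epsilon>)"

definition condA :: "(nat \<Rightarrow> nat) \<Rightarrow> nat \<Rightarrow> (nat \<Rightarrow> real) \<Rightarrow> real \<Rightarrow> bool" where
  "condA a D \<sigma> \<epsilon> \<longleftrightarrow> \<epsilon> \<noteq> -1 \<and>
     (\<sigma> 1 ^ 2 - \<sigma> 2) * (1 - \<epsilon> * \<sigma> 1) \<noteq> 0 \<and>
     (\<forall>i\<in>{1..D-1}. (\<sigma> (i + 1) - \<sigma> i) * (\<sigma> (i - 1) - \<sigma> i) \<noteq> 0 \<and>
        real (a i) =
          ((\<epsilon> - 1) * (1 - \<sigma> 2) / ((\<sigma> 1 ^ 2 - \<sigma> 2) * (1 - \<epsilon> * \<sigma> 1))) *
          ((\<sigma> (i + 1) - \<sigma> 1 * \<sigma> i) * (\<sigma> (i - 1) - \<sigma> 1 * \<sigma> i)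
           / ((\<sigma> (i + 1) - \<sigma> i) * (\<sigma> (i - 1) - \<sigma> i))))"

definition h_param :: "(nat \<Rightarrow> real) \<Rightarrow> real \<Rightarrow> real" where
  "h_param \<sigma> \<epsilon> = (1 - \<sigma> 1) * (1 - \<sigma> 2) / ((\<sigma> 1 ^ 2 - \<sigma> 2) * (1 - \<epsilon> * \<sigma> 1))"

definition condB :: "(nat \<Rightarrow> nat) \<Rightarrow> nat \<Rightarrow> (nat \<Rightarrow> real) \<Rightarrow> real \<Rightarrow> bool" where
  "condB b D \<sigma> \<epsilon> \<longleftrightarrow>
     (\<sigma> 1 ^ 2 - \<sigma> 2) * (1 - \<epsilon> * \<sigma> 1) \<noteq> 0 \<and>
     (\<forall>i\<in>{1..D-1}. \<sigma> (i + 1) - \<sigma> i \<noteq> 0 \<and>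
        real (b i) * (\<sigma> (i - 1) - \<sigma> (i + 1)) =
          h_param \<sigma> \<epsilon> * ((\<sigma> (i - 1) - \<sigma> 1 * \<sigma> i) * (\<sigma> (i + 1) - \<epsilon> * \<sigma> i)
                         / (\<sigma> (i + 1) - \<sigma> i)))"

definition condC :: "(nat \<Rightarrow> nat) \<Rightarrow> (nat \<Rightarrow> nat) \<Rightarrow> nat \<Rightarrow> (nat \<Rightarrow> real) \<Rightarrow> real \<Rightarrow> bool" where
  "condC b c D \<sigma> \<epsilon> \<longleftrightarrow>
     (\<sigma> 1 ^ 2 - \<sigma> 2) * (1 - \<epsilon> * \<sigma> 1) \<noteq> 0 \<and> \<sigma> 1 - 1 \<noteq> 0 \<and>
     real (b 0) = h_param \<sigma> \<epsilon> * ((\<sigma> 1 - \<epsilon>) / (\<sigma> 1 - 1)) \<and>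
     (\<forall>i\<in>{1..D-1}. \<sigma> (i - 1) - \<sigma> i \<noteq> 0 \<and>
        real (c i) * (\<sigma> (i + 1) - \<sigma> (i - 1)) =
          h_param \<sigma> \<epsilon> * ((\<sigma> (i + 1) - \<sigma> 1 * \<sigma> i) * (\<sigma> (i - 1) - \<epsilon> * \<sigma> i)
                         / (\<sigma> (i - 1) - \<sigma> i)))"

end

theory Submission
  imports Defs
begin


lemma auxstep:
  fixes a b c k x y z s e l w :: real
  assumes abc: "a + b + c = k" and P: "c*x + a*y + b*z = k*s*y"
    and A: "a*(z-y)*(x-y)*(s-e) = k*(1-e)*(z-s*y)*(x-s*y)"
    and se: "s \<noteq> e" and b: "b \<noteq> 0" and zy: "z \<noteq> y"
    and wd: "(s-e)*(b*w) = k*(1-e*s)*(l*(x-e*y)) - (s-e)*(c*(l*(y-e*x)) + a*(l*(x-e*y)))"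
  shows "w*(z-e*y) = (l*(x-e*y))*(y-e*z)"
proof -
  have c: "c = k - a - b" using abc by simp
  have bz: "b*(z-x) = k*(s*y-x) - a*(y-x)" using P unfolding c by (simp add: algebra_simps)
  have key: "(s-e)*b*(w*(z-e*y) - (l*(x-e*y))*(y-e*z)) = l*(1+e)*((z-e*y)*(k*(1-e)*(x-s*y) - (s-e)*a*(x-y)) + (s-e)*(1-e)*y*(b*(z-x)))"
    using wd unfolding c by algebra
  have key2: "(z-y)*((z-e*y)*(k*(1-e)*(x-s*y) - (s-e)*a*(x-y)) + (s-e)*(1-e)*y*(k*(s*y-x) - a*(y-x))) = 0"
    using A by algebra
  have "(z-y)*((s-e)*b*(w*(z-e*y) - (l*(x-e*y))*(y-e*z))) = 0"
    using key key2 bz by (metis mult.left_commute mult_zero_right)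
  then show ?thesis using se b zy by simp
qed


lemma taustep:
  fixes a b c k x y z s e l w :: real
  assumes abc: "a + b + c = k" and P: "c*x + a*y + b*z = k*s*y"
    and A: "a*(z-y)*(x-y)*(s-e) = k*(1-e)*(z-s*y)*(x-s*y)"
    and se: "s \<noteq> e"
    and wd: "(s-e)*(b*w) = k*(1-e*s)*(l*(x-e*y)) - (s-e)*(c*(l*(y-e*x)) + a*(l*(x-e*y)))"
  shows "c*x*(l*(y-e*x)) + a*y*(l*(x-e*y)) + b*z*w = k*s*((1-e*s)/(s-e))*y*(l*(x-e*y))"
proof -
  have b: "b = k - a - c" using abc by simp
  have cz: "c*(x-z) = a*(z-y) - k*(z-s*y)" using P unfolding b by (simp add: algebra_simps)
  have key: "(s-e)*(c*x*(l*(y-e*x)) + a*y*(l*(x-e*y)) + b*z*w) - k*s*(1-e*s)*y*(l*(x-e*y))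
     = l*((s-e)*((y-e*x)*(c*(x-z)) + a*(x-e*y)*(y-z)) + k*(1-e*s)*(x-e*y)*(z-s*y))"
    using wd by algebra
  have key2: "(s-e)*((y-e*x)*(a*(z-y) - k*(z-s*y)) + a*(x-e*y)*(y-z)) + k*(1-e*s)*(x-e*y)*(z-s*y) = 0"
    using A by algebra
  have "(s-e)*(c*x*(l*(y-e*x)) + a*y*(l*(x-e*y)) + b*z*w) - k*s*(1-e*s)*y*(l*(x-e*y)) = 0"
    using key key2 cz by simp
  then show ?thesis using se by (simp add: field_simps)
qed


lemma Estar:
  fixes a b c k x y z s e l w r :: real
  assumes abc: "a + b + c = k" and P: "c*x + a*y + b*z = k*s*y"
    and R: "c*(l*(y-e*x)) + a*(l*(x-e*y)) + b*w = k*r*(l*(x-e*y))"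
    and T: "c*x*(l*(y-e*x)) + a*y*(l*(x-e*y)) + b*z*w = k*s*r*y*(l*(x-e*y))"
    and rd: "r*(s-e) = 1-e*s"
  shows "l*(1+e)*(-(s-e)*a*b*(x-y)^2 + (a*(x-y) - k*(x-s*y))*((1-e)*k*(x-s*y) - (s-e)*a*(x-y)) + b*(1-e)*k*(x-s*y)^2) = 0"
proof -
  define p where "p = l*(y-e*x)"
  define q where "q = l*(x-e*y)"
  have c: "c = k - a - b" using abc by simp
  have I: "b*(z-x) = a*(x-y) - k*(x-s*y)" using P unfolding c by algebra
  have II: "b*(w-p) = k*(r*q-p) - a*(q-p)" using R unfolding c p_def q_def by algebra
  have III: "a*(y-x)*(q-p) + b*(z-x)*(w-p) = k*(s*y-x)*(r*q-p)"
    using T R P unfolding c p_def q_def by algebra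
  have qp: "q - p = l*(1+e)*(x-y)" unfolding p_def q_def by algebra
  have rqp: "(s-e)*(r*q-p) = l*(1-e^2)*(x-s*y)" unfolding p_def q_def using rd by algebra
  have II': "(s-e)*(b*(w-p)) = l*(1+e)*(k*(1-e)*(x-s*y) - (s-e)*a*(x-y))"
    using II qp rqp by algebra
  have "(s-e)*b*(a*(y-x)*(q-p) + b*(z-x)*(w-p)) = (s-e)*b*(k*(s*y-x)*(r*q-p))"
    using III by simp
  then have "(s-e)*b*a*(y-x)*(q-p) + (b*(z-x))*((s-e)*(b*(w-p))) = b*k*(s*y-x)*((s-e)*(r*q-p))"
    by (simp add: algebra_simps)
  then show ?thesis unfolding I II' qp rqp by algebra
qed


lemma mul_div_eq: fixes a g F N G :: real
  assumes "a = (g/N)*(F/G)" "N \<noteq> 0" "G \<noteq> 0" shows "a*(N*G) = g*F"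
  using assms by (simp add: field_simps)

lemma div_eq_of_mul: fixes a g F N G :: real
  assumes "a*(N*G) = g*F" "N \<noteq> 0" "G \<noteq> 0" shows "a = (g/N)*(F/G)"
  using assms by (simp add: field_simps)

lemma Ak_of_A:
  fixes a x y z s e t k :: real
  assumes Dn: "(s^2 - t)*(1-e*s) \<noteq> 0" and s1: "s \<noteq> 1" and zy: "z \<noteq> y" and xy: "x \<noteq> y"
    and A: "a = ((e-1)*(1-t)/((s^2 - t)*(1-e*s))) * ((z-s*y)*(x-s*y)/((z-y)*(x-y)))"
    and K: "k = ((1-s)*(1-t)/((s^2 - t)*(1-e*s))) * ((s-e)/(s-1))"
  shows "a*(z-y)*(x-y)*(s-e) = k*(1-e)*(z-s*y)*(x-s*y)"
proof -
  have A': "a*(((s^2 - t)*(1-e*s))*((z-y)*(x-y))) = (e-1)*(1-t)*((z-s*y)*(x-s*y))"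
    using mul_div_eq[OF A] Dn zy xy by simp
  have K': "k*(((s^2 - t)*(1-e*s))*(s-1)) = (1-s)*(1-t)*(s-e)"
    using mul_div_eq[OF K] Dn s1 by simp
  have "((s^2 - t)*(1-e*s))*(s-1)*(a*(z-y)*(x-y)*(s-e)) = ((s^2 - t)*(1-e*s))*(s-1)*(k*(1-e)*(z-s*y)*(x-s*y))"
    using A' K' by algebra
  then show ?thesis using Dn s1 by simp
qed

lemma A_of_Ak:
  fixes a x y z s e t k :: real
  assumes Dn: "(s^2 - t)*(1-e*s) \<noteq> 0" and se: "s \<noteq> e" and zy: "z \<noteq> y" and xy: "x \<noteq> y"
    and Ak: "a*(z-y)*(x-y)*(s-e) = k*(1-e)*(z-s*y)*(x-s*y)"
    and Kk: "(1-t)*(s-e) = k*(t-s^2)*(1-e*s)"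
  shows "a = ((e-1)*(1-t)/((s^2 - t)*(1-e*s))) * ((z-s*y)*(x-s*y)/((z-y)*(x-y)))"
proof -
  have "(s-e)*(a*(((s^2 - t)*(1-e*s))*((z-y)*(x-y)))) = (s-e)*((e-1)*(1-t)*((z-s*y)*(x-s*y)))"
    using Ak Kk by algebra
  then have h: "a*(((s^2 - t)*(1-e*s))*((z-y)*(x-y))) = (e-1)*(1-t)*((z-s*y)*(x-s*y))" using se by simp
  show ?thesis by (rule div_eq_of_mul[OF h Dn]) (use zy xy in simp)
qed

lemma K_of_Kk:
  fixes s e t k :: real
  assumes Dn: "(s^2 - t)*(1-e*s) \<noteq> 0" and s1: "s \<noteq> 1"
    and Kk: "(1-t)*(s-e) = k*(t-s^2)*(1-e*s)"
  shows "k = ((1-s)*(1-t)/((s^2 - t)*(1-e*s))) * ((s-e)/(s-1))"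
proof -
  have h: "k*(((s^2 - t)*(1-e*s))*(s-1)) = (1-s)*(1-t)*(s-e)" using Kk by algebra
  show ?thesis by (rule div_eq_of_mul[OF h Dn]) (use s1 in simp)
qed

lemma stepPB:
  fixes a b c k x y z s e t :: real
  assumes abc: "a + b + c = k" and Dn: "(s^2 - t)*(1-e*s) \<noteq> 0" and s1: "s \<noteq> 1" and zy: "z \<noteq> y" and xy: "x \<noteq> y"
    and A: "a = ((e-1)*(1-t)/((s^2 - t)*(1-e*s))) * ((z-s*y)*(x-s*y)/((z-y)*(x-y)))"
    and K: "k = ((1-s)*(1-t)/((s^2 - t)*(1-e*s))) * ((s-e)/(s-1))"
  shows "(c*x + a*y + b*z = k*s*y) \<longleftrightarrow> b*(x-z) = ((1-s)*(1-t)/((s^2 - t)*(1-e*s))) * ((x-s*y)*(z-e*y)/(z-y))"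
    and "(c*x + a*y + b*z = k*s*y) \<longleftrightarrow> c*(z-x) = ((1-s)*(1-t)/((s^2 - t)*(1-e*s))) * ((z-s*y)*(x-e*y)/(x-y))"
proof -
  have A': "a*(((s^2 - t)*(1-e*s))*((z-y)*(x-y))) = (e-1)*(1-t)*((z-s*y)*(x-s*y))"
    using mul_div_eq[OF A] Dn zy xy by simp
  have K': "k*(((s^2 - t)*(1-e*s))*(s-1)) = (1-s)*(1-t)*(s-e)"
    using mul_div_eq[OF K] Dn s1 by simp
  have c: "c = k - a - b" using abc by simp
  have P1: "(c*x + a*y + b*z = k*s*y) \<longleftrightarrow> b*(x-z) = k*(x-s*y) - a*(x-y)"
    unfolding c by (auto simp: algebra_simps)
  have "(s-1)*(x-y)*((k*(x-s*y) - a*(x-y))*(((s^2 - t)*(1-e*s))*(z-y))) = (s-1)*(x-y)*((1-s)*(1-t)*((x-s*y)*(z-e*y)))"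
    using A' K' by algebra
  then have "(k*(x-s*y) - a*(x-y))*(((s^2 - t)*(1-e*s))*(z-y)) = (1-s)*(1-t)*((x-s*y)*(z-e*y))"
    using s1 xy by simp
  then have id1: "k*(x-s*y) - a*(x-y) = ((1-s)*(1-t)/((s^2 - t)*(1-e*s))) * ((x-s*y)*(z-e*y)/(z-y))"
    by (rule div_eq_of_mul[OF _ Dn]) (use zy in simp)
  show "(c*x + a*y + b*z = k*s*y) \<longleftrightarrow> b*(x-z) = ((1-s)*(1-t)/((s^2 - t)*(1-e*s))) * ((x-s*y)*(z-e*y)/(z-y))"
    using P1 id1 by simp
  have b: "b = k - a - c" using abc by simp
  have P2: "(c*x + a*y + b*z = k*s*y) \<longleftrightarrow> c*(z-x) = k*(z-s*y) - a*(z-y)"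
    unfolding b by (auto simp: algebra_simps)
  have "(s-1)*(z-y)*((k*(z-s*y) - a*(z-y))*(((s^2 - t)*(1-e*s))*(x-y))) = (s-1)*(z-y)*((1-s)*(1-t)*((z-s*y)*(x-e*y)))"
    using A' K' by algebra
  then have "(k*(z-s*y) - a*(z-y))*(((s^2 - t)*(1-e*s))*(x-y)) = (1-s)*(1-t)*((z-s*y)*(x-e*y))"
    using s1 zy by simp
  then have id2: "k*(z-s*y) - a*(z-y) = ((1-s)*(1-t)/((s^2 - t)*(1-e*s))) * ((z-s*y)*(x-e*y)/(x-y))"
    by (rule div_eq_of_mul[OF _ Dn]) (use xy in simp)
  show "(c*x + a*y + b*z = k*s*y) \<longleftrightarrow> c*(z-x) = ((1-s)*(1-t)/((s^2 - t)*(1-e*s))) * ((z-s*y)*(x-e*y)/(x-y))"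
    using P2 id2 by simp
qed

lemma step1K:
  fixes a b k s e t :: real
  assumes abc: "a + b + 1 = k" and Dn: "(s^2 - t)*(1-e*s) \<noteq> 0" and s1: "s \<noteq> 1" and ts: "t \<noteq> s" and t1: "t \<noteq> 1"
    and A: "a = ((e-1)*(1-t)/((s^2 - t)*(1-e*s))) * ((t-s*s)*(1-s*s)/((t-s)*(1-s)))"
  shows "(1*1 + a*s + b*t = k*s*s) \<longleftrightarrow> k = ((1-s)*(1-t)/((s^2 - t)*(1-e*s))) * ((s-e)/(s-1))"
    and "b*(1-t) = ((1-s)*(1-t)/((s^2 - t)*(1-e*s))) * ((1-s*s)*(t-e*s)/(t-s)) \<longleftrightarrow> k = ((1-s)*(1-t)/((s^2 - t)*(1-e*s))) * ((s-e)/(s-1))"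
proof -
  define H where "H = ((1-s)*(1-t)/((s^2 - t)*(1-e*s))) * ((s-e)/(s-1))"
  have A': "a*(((s^2 - t)*(1-e*s))*((t-s)*(1-s))) = (e-1)*(1-t)*((t-s*s)*(1-s*s))"
    using mul_div_eq[OF A] Dn ts s1 by simp
  have H': "H*(((s^2 - t)*(1-e*s))*(s-1)) = (1-s)*(1-t)*(s-e)"
    using mul_div_eq[OF H_def] Dn s1 by simp
  have N: "(s^2 - t)*(1-e*s) \<noteq> 0" by fact
  have b: "b = k - a - 1" using abc by simp
  have "(1*1 + a*s + b*t = k*s*s) \<longleftrightarrow> k*(t-s^2) = (1+a)*t - 1 - a*s"
    unfolding b by (auto simp: algebra_simps power2_eq_square)
  moreover have "((s^2 - t)*(1-e*s))*(t-s)*(1-s)*(s-1)*((1+a)*t - 1 - a*s) = ((s^2 - t)*(1-e*s))*(t-s)*(1-s)*(s-1)*(H*(t-s^2))"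
    using A' H' by algebra
  then have "(1+a)*t - 1 - a*s = H*(t-s^2)" using N ts s1 by simp
  ultimately have P: "(1*1 + a*s + b*t = k*s*s) \<longleftrightarrow> (k - H)*(t - s^2) = 0"
    by (auto simp: algebra_simps)
  have d1: "t - s^2 \<noteq> 0" using Dn by auto
  show "(1*1 + a*s + b*t = k*s*s) \<longleftrightarrow> k = H" unfolding P using d1 by simp
  have "((s^2 - t)*(1-e*s))*(t-s)*(1-s)*(s-1)*((1-s)*(1-t)*((1-s*s)*(t-e*s))) = ((s^2 - t)*(1-e*s))*(t-s)*(1-s)*(s-1)*(((H - a - 1)*(1-t))*(((s^2 - t)*(1-e*s))*(t-s)))"
    using A' H' by algebra
  moreover have "((s^2 - t)*(1-e*s))*(t-s)*(1-s)*(s-1) \<noteq> 0" using N ts s1 by simp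
  ultimately have "((H - a - 1)*(1-t))*(((s^2 - t)*(1-e*s))*(t-s)) = (1-s)*(1-t)*((1-s*s)*(t-e*s))"
    using mult_left_cancel by metis
  then have "(H - a - 1)*(1-t) = ((1-s)*(1-t)/((s^2 - t)*(1-e*s))) * ((1-s*s)*(t-e*s)/(t-s))"
    by (rule div_eq_of_mul[OF _ N]) (use ts in simp)
  then have B: "b*(1-t) = ((1-s)*(1-t)/((s^2 - t)*(1-e*s))) * ((1-s*s)*(t-e*s)/(t-s)) \<longleftrightarrow> (k - H)*(1-t) = 0"
    unfolding b by (auto simp: algebra_simps)
  show "b*(1-t) = ((1-s)*(1-t)/((s^2 - t)*(1-e*s))) * ((1-s*s)*(t-e*s)/(t-s)) \<longleftrightarrow> k = H" unfolding B using t1 by simp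
qed


lemma stepI:
  fixes a b c k x y z s e l w r :: real
  assumes abc: "a + b + c = k" and P: "c*x + a*y + b*z = k*s*y"
    and R: "c*(l*(y-e*x)) + a*(l*(x-e*y)) + b*w = k*r*(l*(x-e*y))"
    and T: "c*x*(l*(y-e*x)) + a*y*(l*(x-e*y)) + b*z*w = k*s*r*y*(l*(x-e*y))"
    and rd: "r*(s-e) = 1-e*s"
    and l: "l \<noteq> 0" and e1: "e \<noteq> -1" and e2: "e \<noteq> 1" and se: "s \<noteq> e" and s1: "s \<noteq> 1"
    and a0: "a \<ge> 0" and b: "b > 0" and c: "c > 0" and xy: "x \<noteq> y"
  shows "a*(z-y)*(x-y)*(s-e) = k*(1-e)*(z-s*y)*(x-s*y)" and "z \<noteq> y"
proof -
  have "l*(1+e)*(-(s-e)*a*b*(x-y)^2 + (a*(x-y) - k*(x-s*y))*((1-e)*k*(x-s*y) - (s-e)*a*(x-y)) + b*(1-e)*k*(x-s*y)^2) = 0"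
    by (rule Estar[OF abc P R T rd])
  moreover have "1 + e \<noteq> 0" using e1 by (metis add.commute add_eq_0_iff)
  ultimately have E: "-(s-e)*a*b*(x-y)^2 + (a*(x-y) - k*(x-s*y))*((1-e)*k*(x-s*y) - (s-e)*a*(x-y)) + b*(1-e)*k*(x-s*y)^2 = 0"
    using l by simp
  have cc: "c = k - a - b" using abc by simp
  have I: "b*(z-x) = a*(x-y) - k*(x-s*y)" using P unfolding cc by algebra
  have "b*(a*(z-y)*(x-y)*(s-e) - k*(1-e)*(z-s*y)*(x-s*y)) = -(-(s-e)*a*b*(x-y)^2 + (a*(x-y) - k*(x-s*y))*((1-e)*k*(x-s*y) - (s-e)*a*(x-y)) + b*(1-e)*k*(x-s*y)^2)"
    using I by algebra
  then have "b*(a*(z-y)*(x-y)*(s-e) - k*(1-e)*(z-s*y)*(x-s*y)) = 0" using E by simp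
  then show Ak: "a*(z-y)*(x-y)*(s-e) = k*(1-e)*(z-s*y)*(x-s*y)" using b by simp
  show "z \<noteq> y"
  proof
    assume zy: "z = y"
    have k: "k \<noteq> 0" using abc a0 b c by linarith
    have "k*(1-e)*(y*(1-s)*(x-s*y)) = 0" using Ak zy by (simp add: algebra_simps)
    moreover have "1 - e \<noteq> 0" "1 - s \<noteq> 0" using e2 s1 by auto
    ultimately have "y = 0 \<or> x - s*y = 0" using k by simp
    then show False
    proof
      assume y0: "y = 0"
      have "c*x = 0" using P zy y0 by simp
      then have "x = 0" using c by simp
      then show False using xy y0 by simp
    next
      assume xs: "x - s*y = 0"
      have "b*(y-x) = a*(x-y)" using I zy xs by simp
      then have "(a+b)*(y-x) = 0" by (simp add: algebra_simps)
      moreover have "y - x \<noteq> 0" using xy by simp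
      ultimately have "a + b = 0" by simp
      then show False using a0 b by linarith
    qed
  qed
qed


lemma eps_not_1:
  fixes a1 b1 a2 b2 c2 k s t r u s3 r3 e :: real
  assumes k: "k = 1 + a1 + b1" and a1: "a1 > 0" and b1: "b1 > 0"
    and k2: "k = a2 + b2 + c2" and a2: "a2 \<ge> 0" and b2: "b2 > 0" and c2: "c2 > 0"
    and S: "1 + a1*s + b1*t = k*s*s"
    and Rr: "1 + a1*r + b1*u = k*r*r"
    and S2: "c2*s + a2*t + b2*s3 = k*s*t"
    and R2: "c2*r + a2*u + b2*r3 = k*r*u"
    and aux1: "s*r - 1 = e*(r - s)" and aux2: "t*u - s*r = e*(s*u - t*r)"
    and aux3: "s3*r3 - t*u = e*(t*r3 - s3*u)"
    and s1: "s \<noteq> 1" and e: "e = 1"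
  shows False
proof -
  have "(s-1)*(r+1) = 0" using aux1 e by (simp add: algebra_simps)
  then have r: "r = -1" using s1 by simp
  have "(t-s)*(u-1) = 0" using aux2 e r by (simp add: algebra_simps)
  moreover have bu: "b1*(u-1) = 2*a1" using Rr r k by (simp add: algebra_simps)
  then have "b1*(u-1) > 0" using a1 by simp
  then have u1: "u > 1" using b1 by (simp add: zero_less_mult_iff)
  ultimately have t: "t = s" by simp
  have "(1-s)*(1+k*s) = 0" using S t k by (simp add: algebra_simps)
  then have ks: "k*s = -1" using s1 by simp
  have "(s3-t)*(r3+u) = 0" using aux3 e by (simp add: algebra_simps)
  moreover have "s3 \<noteq> t"
  proof
    assume "s3 = t"
    then have "s*(b2 + 1 + c2 + a2) = 0" using S2 t ks by (simp add: algebra_simps)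
    moreover have "b2 + 1 + c2 + a2 > 0" using a2 b2 c2 by simp
    ultimately have "s = 0" by simp
    then show False using ks by simp
  qed
  ultimately have r3: "r3 = -u" by simp
  have "u*(2*a2 + c2) = c2" using R2 r r3 k2 by (simp add: algebra_simps)
  moreover have "u*(2*a2 + c2) > 1*(2*a2+c2)"
    using u1 a2 c2 by (intro mult_strict_right_mono) auto
  ultimately show False using a2 by simp
qed

lemma getl:
  fixes x y p q e :: real
  assumes e1: "e \<noteq> 1" and e2: "e \<noteq> -1" and xy: "x \<noteq> y" and aux: "q*(y-e*x) = p*(x-e*y)"
  shows "\<exists>l. p = l*(y-e*x) \<and> q = l*(x-e*y)"
proof (cases "x - e*y = 0")
  case False
  show ?thesis
  proof (intro exI conjI)
    show "p = q/(x-e*y)*(y-e*x)" using aux False by (simp add: field_simps)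
    show "q = q/(x-e*y)*(x-e*y)" using False by simp
  qed
next
  case True
  have ee: "1 - e*e \<noteq> 0"
  proof
    assume "1 - e*e = 0"
    then have "(1-e)*(1+e) = 0" by (simp add: algebra_simps)
    then show False using e1 e2 by (auto simp: add_eq_0_iff)
  qed
  have y0: "y \<noteq> 0" using True xy by auto
  have "y - e*x = y*(1-e*e)" using True by (simp add: algebra_simps)
  then have Y: "y - e*x \<noteq> 0" using y0 ee by simp
  have q: "q = 0" using aux True Y by simp
  show ?thesis
  proof (intro exI conjI)
    show "p = p/(y-e*x)*(y-e*x)" using Y by simp
    show "q = p/(y-e*x)*(x-e*y)" using q True by simp
  qed
qed

lemma Kk_of:
  fixes a1 b1 k s t e :: real
  assumes k: "k = 1 + a1 + b1" and S: "1 + a1*s + b1*t = k*s*s"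
    and Ak: "a1*(t-s)*(1-s)*(s-e) = k*(1-e)*(t-s*s)*(1-s*s)" and s1: "s \<noteq> 1"
  shows "(1-t)*(s-e) = k*(t-s^2)*(1-e*s)"
proof -
  have b: "b1 = k - 1 - a1" using k by simp
  have a: "a1*(t-s) = (1-t) + k*(t-s*s)" using S unfolding b by algebra
  have "(1-s)*((1-t)*(s-e)) = (1-s)*(k*(t-s^2)*(1-e*s))"
    using Ak a by algebra
  then show ?thesis using s1 by simp
qed

lemma nondeg:
  fixes a1 a2 k s t s3 e :: real
  assumes Kk: "(1-t)*(s-e) = k*(t-s^2)*(1-e*s)" and se: "s \<noteq> e" and s1: "s \<noteq> 1"
    and a1: "a1 \<noteq> 0" and a2: "a2 \<noteq> 0"
    and Ak1: "a1*(t-s)*(1-s)*(s-e) = k*(1-e)*(t-s*s)*(1-s*s)"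
    and Ak2: "a2*(s3-t)*(s-t)*(s-e) = k*(1-e)*(s3-s*t)*(s-s*t)"
    and s3: "s3 \<noteq> t" and ts: "t \<noteq> s"
  shows "(s^2 - t)*(1-e*s) \<noteq> 0"
proof
  assume D0: "(s^2 - t)*(1-e*s) = 0"
  have "k*(t-s^2)*(1-e*s) = -k*((s^2 - t)*(1-e*s))" by (simp add: algebra_simps)
  then have "(1-t)*(s-e) = 0" using Kk D0 by simp
  then have t: "t = 1" using se by simp
  show False
  proof (cases "s = -1")
    case True
    have "a1*(t-s)*(1-s)*(s-e) = 0" using Ak1 True by simp
    then show False using a1 True t se by simp
  next
    case False
    have "s^2 - t \<noteq> 0"
    proof
      assume "s^2 - t = 0"
      then have "(s-1)*(s+1) = 0" using t by (simp add: algebra_simps power2_eq_square)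
      then show False using s1 False by (auto simp: add_eq_0_iff)
    qed
    then have es: "1 - e*s = 0" using D0 by simp
    have "s - s*t = 0" using t by simp
    then have "a2*(s3-t)*(s-t)*(s-e) = 0" using Ak2 by simp
    then show False using a2 s3 ts se by simp
  qed
qed



definition GF :: "(nat \<Rightarrow> nat) \<Rightarrow> (nat \<Rightarrow> nat) \<Rightarrow> (nat \<Rightarrow> nat) \<Rightarrow> nat \<Rightarrow> bool" where
  "GF a b c D \<longleftrightarrow> 3 \<le> D \<and> a 0 = 0 \<and> c 1 = 1 \<and> a 1 \<noteq> 0 \<and> a 2 \<noteq> 0 \<and>
     (\<forall>i\<in>{1..D-1}. a i + b i + c i = b 0) \<and> (\<forall>i<D. 1 \<le> b i) \<and> (\<forall>i\<in>{1..D-1}. 1 \<le> c i)"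

abbreviation PC where
  "PC a b c D \<sigma> \<equiv> (\<forall>i\<in>{1..D-1}. real (c i) * \<sigma> (i-1) + real (a i) * \<sigma> i + real (b i) * \<sigma> (i+1) = real (b 0) * \<sigma> 1 * \<sigma> i)"

lemma pc_iff:
  assumes D: "0 < D" and a0: "a 0 = 0"
  shows "pseudo_cosine a b c D \<sigma> \<longleftrightarrow> \<sigma> 0 = 1 \<and> PC a b c D \<sigma>"
proof
  assume "pseudo_cosine a b c D \<sigma>"
  then obtain \<theta> where s0: "\<sigma> 0 = 1" and R: "\<forall>i<D. real (c i) * (if i = 0 then 0 else \<sigma> (i - 1)) + real (a i) * \<sigma> i
             + real (b i) * \<sigma> (i + 1) = \<theta> * \<sigma> i"
    unfolding pseudo_cosine_def pseudo_cosine_for_def by blast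
  have th: "\<theta> = real (b 0) * \<sigma> 1" using R[rule_format, OF D] a0 s0 by simp
  show "\<sigma> 0 = 1 \<and> PC a b c D \<sigma>"
  proof (intro conjI ballI s0)
    fix i assume i: "i \<in> {1..D-1}"
    then have "i < D" "i \<noteq> 0" by auto
    then show "real (c i) * \<sigma> (i-1) + real (a i) * \<sigma> i + real (b i) * \<sigma> (i+1) = real (b 0) * \<sigma> 1 * \<sigma> i"
      using R th by auto
  qed
next
  assume H: "\<sigma> 0 = 1 \<and> PC a b c D \<sigma>"
  show "pseudo_cosine a b c D \<sigma>"
    unfolding pseudo_cosine_def pseudo_cosine_for_def
  proof (intro exI[of _ "real (b 0) * \<sigma> 1"] conjI allI impI)
    show "\<sigma> 0 = 1" using H by simp
    fix i assume i: "i < D"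
    show "real (c i) * (if i = 0 then 0 else \<sigma> (i - 1)) + real (a i) * \<sigma> i + real (b i) * \<sigma> (i + 1) = real (b 0) * \<sigma> 1 * \<sigma> i"
    proof (cases "i = 0")
      case True then show ?thesis using a0 H by simp
    next
      case False then have "i \<in> {1..D-1}" using i by auto
      then show ?thesis using H False by auto
    qed
  qed
qed

lemma GF_abc: assumes "GF a b c D" "i \<in> {1..D-1}"
  shows "real (a i) + real (b i) + real (c i) = real (b 0)"
  using assms unfolding GF_def by (metis of_nat_add)

lemma GF_b: assumes "GF a b c D" "i < D" shows "real (b i) \<ge> 1"
  using assms unfolding GF_def by auto

lemma GF_c: assumes "GF a b c D" "i \<in> {1..D-1}" shows "real (c i) \<ge> 1"
  using assms unfolding GF_def by auto

lemma condA_at: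
  assumes "condA a D \<sigma> \<epsilon>" "i \<in> {1..D-1}"
  shows "(\<sigma> (i + 1) - \<sigma> i) * (\<sigma> (i - 1) - \<sigma> i) \<noteq> 0 \<and>
        real (a i) =
          ((\<epsilon> - 1) * (1 - \<sigma> 2) / ((\<sigma> 1 ^ 2 - \<sigma> 2) * (1 - \<epsilon> * \<sigma> 1))) *
          ((\<sigma> (i + 1) - \<sigma> 1 * \<sigma> i) * (\<sigma> (i - 1) - \<sigma> 1 * \<sigma> i)
           / ((\<sigma> (i + 1) - \<sigma> i) * (\<sigma> (i - 1) - \<sigma> i)))"
  using assms unfolding condA_def by blast

lemma condA_basic:
  assumes GF: "GF a b c D" and s0: "\<sigma> 0 = 1" and A: "condA a D \<sigma> \<epsilon>"
  shows "\<sigma> 1 \<noteq> 1" "\<sigma> 2 \<noteq> \<sigma> 1" "\<sigma> 2 \<noteq> 1" "\<epsilon> \<noteq> 1" "\<epsilon> \<noteq> -1"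
    "(\<sigma> 1 ^ 2 - \<sigma> 2) * (1 - \<epsilon> * \<sigma> 1) \<noteq> 0"
proof -
  have D: "3 \<le> D" using GF unfolding GF_def by simp
  have "1 \<in> {1..D-1}" using D by auto
  then have A1: "(\<sigma> 2 - \<sigma> 1) * (\<sigma> 0 - \<sigma> 1) \<noteq> 0 \<and>
        real (a 1) =
          ((\<epsilon> - 1) * (1 - \<sigma> 2) / ((\<sigma> 1 ^ 2 - \<sigma> 2) * (1 - \<epsilon> * \<sigma> 1))) *
          ((\<sigma> 2 - \<sigma> 1 * \<sigma> 1) * (\<sigma> 0 - \<sigma> 1 * \<sigma> 1)
           / ((\<sigma> 2 - \<sigma> 1) * (\<sigma> 0 - \<sigma> 1)))"
    using condA_at[OF A \<open>1 \<in> {1..D-1}\<close>] by (simp only: one_add_one diff_self_eq_0; (simp)?)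
  show "\<sigma> 1 \<noteq> 1" "\<sigma> 2 \<noteq> \<sigma> 1" using A1 s0 by auto
  have a1: "real (a 1) \<noteq> 0" using GF unfolding GF_def by simp
  show "\<sigma> 2 \<noteq> 1" using A1 a1 by auto
  show "\<epsilon> \<noteq> 1" using A1 a1 by auto
  show "\<epsilon> \<noteq> -1" "(\<sigma> 1 ^ 2 - \<sigma> 2) * (1 - \<epsilon> * \<sigma> 1) \<noteq> 0" using A unfolding condA_def by auto
qed



lemma part234:
  assumes GF: "GF a b c D" and s0: "\<sigma> 0 = 1" and A: "condA a D \<sigma> \<epsilon>"
  defines "Q \<equiv> real (b 0) = h_param \<sigma> \<epsilon> * ((\<sigma> 1 - \<epsilon>) / (\<sigma> 1 - 1)) \<and> PC a b c D \<sigma>"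
  shows "pseudo_cosine a b c D \<sigma> \<longleftrightarrow> Q" "condB b D \<sigma> \<epsilon> \<longleftrightarrow> Q" "condC b c D \<sigma> \<epsilon> \<longleftrightarrow> Q"
proof -
  have D: "3 \<le> D" and a0: "a 0 = 0" and c1: "c 1 = 1" using GF unfolding GF_def by auto
  note bas = condA_basic[OF GF s0 A]
  have i1: "1 \<in> {1..D-1}" using D by auto
  define K where "K \<equiv> real (b 0) = h_param \<sigma> \<epsilon> * ((\<sigma> 1 - \<epsilon>) / (\<sigma> 1 - 1))"
  have Kh: "K \<longleftrightarrow> real (b 0) = ((1-\<sigma> 1)*(1-\<sigma> 2)/((\<sigma> 1^2 - \<sigma> 2)*(1-\<epsilon>*\<sigma> 1))) * ((\<sigma> 1-\<epsilon>)/(\<sigma> 1-1))"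
    unfolding K_def h_param_def ..
  have A1: "real (a 1) = ((\<epsilon>-1)*(1-\<sigma> 2)/((\<sigma> 1^2 - \<sigma> 2)*(1-\<epsilon>*\<sigma> 1))) * ((\<sigma> 2-\<sigma> 1*\<sigma> 1)*(1-\<sigma> 1*\<sigma> 1)/((\<sigma> 2-\<sigma> 1)*(1-\<sigma> 1)))"
    using condA_at[OF A i1] s0 by (simp only: one_add_one diff_self_eq_0; (simp)?)
  have abc1: "real (a 1) + real (b 1) + 1 = real (b 0)" using GF_abc[OF GF i1] c1 by simp
  note S1 = step1K[OF abc1 bas(6) bas(1) bas(2) bas(3) A1]
  have P1K: "(real (c 1) * \<sigma> (1-1) + real (a 1) * \<sigma> 1 + real (b 1) * \<sigma> (1+1) = real (b 0) * \<sigma> 1 * \<sigma> 1) \<longleftrightarrow> K"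
    using S1(1) c1 s0 Kh by (simp only: one_add_one diff_self_eq_0; (simp)?)
  have B1K: "(real (b 1) * (\<sigma> (1 - 1) - \<sigma> (1 + 1)) =
          h_param \<sigma> \<epsilon> * ((\<sigma> (1 - 1) - \<sigma> 1 * \<sigma> 1) * (\<sigma> (1 + 1) - \<epsilon> * \<sigma> 1)
                         / (\<sigma> (1 + 1) - \<sigma> 1))) \<longleftrightarrow> K"
    using S1(2) s0 Kh unfolding h_param_def by (simp only: one_add_one diff_self_eq_0; (simp)?)
  have step: "(real (c i) * \<sigma> (i-1) + real (a i) * \<sigma> i + real (b i) * \<sigma> (i+1) = real (b 0) * \<sigma> 1 * \<sigma> i
       \<longleftrightarrow> real (b i) * (\<sigma> (i - 1) - \<sigma> (i + 1)) =
          h_param \<sigma> \<epsilon> * ((\<sigma> (i - 1) - \<sigma> 1 * \<sigma> i) * (\<sigma> (i + 1) - \<epsilon> * \<sigma> i)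
                         / (\<sigma> (i + 1) - \<sigma> i)))
     \<and> (real (c i) * \<sigma> (i-1) + real (a i) * \<sigma> i + real (b i) * \<sigma> (i+1) = real (b 0) * \<sigma> 1 * \<sigma> i
       \<longleftrightarrow> real (c i) * (\<sigma> (i + 1) - \<sigma> (i - 1)) =
          h_param \<sigma> \<epsilon> * ((\<sigma> (i + 1) - \<sigma> 1 * \<sigma> i) * (\<sigma> (i - 1) - \<epsilon> * \<sigma> i)
                         / (\<sigma> (i - 1) - \<sigma> i)))"
    if i: "i \<in> {1..D-1}" and K: K for i
  proof -
    have Ai: "(\<sigma> (i + 1) - \<sigma> i) * (\<sigma> (i - 1) - \<sigma> i) \<noteq> 0" and
      ai: "real (a i) = ((\<epsilon> - 1) * (1 - \<sigma> 2) / ((\<sigma> 1 ^ 2 - \<sigma> 2) * (1 - \<epsilon> * \<sigma> 1))) *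
          ((\<sigma> (i + 1) - \<sigma> 1 * \<sigma> i) * (\<sigma> (i - 1) - \<sigma> 1 * \<sigma> i)
           / ((\<sigma> (i + 1) - \<sigma> i) * (\<sigma> (i - 1) - \<sigma> i)))"
      using condA_at[OF A i] by auto
    have zy: "\<sigma> (i+1) \<noteq> \<sigma> i" and xy: "\<sigma> (i-1) \<noteq> \<sigma> i" using Ai by auto
    note S = stepPB[OF GF_abc[OF GF i] bas(6) bas(1) zy xy ai K[unfolded Kh]]
    show ?thesis using S unfolding h_param_def by (simp add: algebra_simps)
  qed
  have pcI: "pseudo_cosine a b c D \<sigma> \<longleftrightarrow> \<sigma> 0 = 1 \<and> PC a b c D \<sigma>"
    by (rule pc_iff) (use D a0 in auto)
  show "pseudo_cosine a b c D \<sigma> \<longleftrightarrow> Q"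
  proof
    assume "pseudo_cosine a b c D \<sigma>"
    then have P: "PC a b c D \<sigma>" using pcI by blast
    then have K using P1K i1 by blast
    then show Q using P unfolding Q_def K_def by blast
  next
    assume Q
    then show "pseudo_cosine a b c D \<sigma>" using pcI s0 unfolding Q_def by blast
  qed
  show "condB b D \<sigma> \<epsilon> \<longleftrightarrow> Q"
  proof
    assume B: "condB b D \<sigma> \<epsilon>"
    have K using B i1 B1K unfolding condB_def by blast
    then show Q unfolding Q_def K_def[symmetric] using B step unfolding condB_def by blast
  next
    assume Q
    then have K: K and P: "PC a b c D \<sigma>" unfolding Q_def K_def by auto
    show "condB b D \<sigma> \<epsilon>" unfolding condB_def
    proof (intro conjI ballI)
      show "(\<sigma> 1 ^ 2 - \<sigma> 2) * (1 - \<epsilon> * \<sigma> 1) \<noteq> 0" by (rule bas(6))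
      fix i assume i: "i \<in> {1..D-1}"
      show "\<sigma> (i + 1) - \<sigma> i \<noteq> 0" using condA_at[OF A i] by auto
      show "real (b i) * (\<sigma> (i - 1) - \<sigma> (i + 1)) =
          h_param \<sigma> \<epsilon> * ((\<sigma> (i - 1) - \<sigma> 1 * \<sigma> i) * (\<sigma> (i + 1) - \<epsilon> * \<sigma> i)
                         / (\<sigma> (i + 1) - \<sigma> i))" using step[OF i K] P i by blast
    qed
  qed
  show "condC b c D \<sigma> \<epsilon> \<longleftrightarrow> Q"
  proof
    assume C: "condC b c D \<sigma> \<epsilon>"
    have K using C unfolding condC_def K_def by blast
    then show Q unfolding Q_def K_def[symmetric] using C step unfolding condC_def by blast
  next
    assume Q
    then have K: K and P: "PC a b c D \<sigma>" unfolding Q_def K_def by auto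
    show "condC b c D \<sigma> \<epsilon>" unfolding condC_def
    proof (intro conjI ballI)
      show "(\<sigma> 1 ^ 2 - \<sigma> 2) * (1 - \<epsilon> * \<sigma> 1) \<noteq> 0" by (rule bas(6))
      show "\<sigma> 1 - 1 \<noteq> 0" using bas(1) by simp
      show "real (b 0) = h_param \<sigma> \<epsilon> * ((\<sigma> 1 - \<epsilon>) / (\<sigma> 1 - 1))" using K unfolding K_def .
      fix i assume i: "i \<in> {1..D-1}"
      show "\<sigma> (i - 1) - \<sigma> i \<noteq> 0" using condA_at[OF A i] by auto
      show "real (c i) * (\<sigma> (i + 1) - \<sigma> (i - 1)) =
          h_param \<sigma> \<epsilon> * ((\<sigma> (i + 1) - \<sigma> 1 * \<sigma> i) * (\<sigma> (i - 1) - \<epsilon> * \<sigma> i)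
                         / (\<sigma> (i - 1) - \<sigma> i))" using step[OF i K] P i by blast
    qed
  qed
qed



fun rhoseq :: "(nat \<Rightarrow> nat) \<Rightarrow> (nat \<Rightarrow> nat) \<Rightarrow> (nat \<Rightarrow> nat) \<Rightarrow> real \<Rightarrow> nat \<Rightarrow> real" where
  "rhoseq a b c r 0 = 1"
| "rhoseq a b c r (Suc 0) = r"
| "rhoseq a b c r (Suc (Suc n)) = (real (b 0) * r * rhoseq a b c r (Suc n)
      - real (c (Suc n)) * rhoseq a b c r n - real (a (Suc n)) * rhoseq a b c r (Suc n)) / real (b (Suc n))"

lemma rhoseq_rec:
  assumes GF: "GF a b c D" and i: "i \<in> {1..D-1}"
  shows "real (c i) * rhoseq a b c r (i-1) + real (a i) * rhoseq a b c r i + real (b i) * rhoseq a b c r (i+1)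
     = real (b 0) * rhoseq a b c r 1 * rhoseq a b c r i"
proof -
  obtain n where n: "i = Suc n" using i by (cases i) auto
  have "i < D" using i by auto
  then have "real (b i) \<noteq> 0" using GF_b[OF GF] by (metis not_one_le_zero)
  then show ?thesis unfolding n by (simp add: field_simps)
qed

lemma part_ii_i:
  assumes GF: "GF a b c D" and s0: "\<sigma> 0 = 1" and A: "condA a D \<sigma> \<epsilon>"
    and pc: "pseudo_cosine a b c D \<sigma>"
  shows "tight_with_aux a b c D \<sigma> \<epsilon>"
proof -
  have D: "3 \<le> D" and a0: "a 0 = 0" and c1: "c 1 = 1" and a1: "a 1 \<noteq> 0" using GF unfolding GF_def by auto
  note bas = condA_basic[OF GF s0 A]
  note P = part234[OF GF s0 A]
  have Q: "real (b 0) = h_param \<sigma> \<epsilon> * ((\<sigma> 1 - \<epsilon>) / (\<sigma> 1 - 1))" and PCs: "PC a b c D \<sigma>"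
    using P(1) pc by auto
  have pcI: "\<And>\<rho>. pseudo_cosine a b c D \<rho> \<longleftrightarrow> \<rho> 0 = 1 \<and> PC a b c D \<rho>"
    by (rule pc_iff) (use D a0 in auto)
  define k where "k = real (b 0)"
  define s where "s = \<sigma> 1"
  define t where "t = \<sigma> 2"
  define e where "e = \<epsilon>"
  have k1: "k \<ge> 1" unfolding k_def using GF_b[OF GF, of 0] D by simp
  have K: "k = ((1-s)*(1-t)/((s^2 - t)*(1-e*s))) * ((s-e)/(s-1))"
    using Q unfolding k_def s_def t_def e_def h_param_def .
  have se: "s \<noteq> e"
  proof
    assume "s = e" then have "k = 0" using K by simp
    then show False using k1 by simp
  qed
  have e1: "e \<noteq> 1" and e2: "e \<noteq> -1" using bas unfolding e_def by auto
  have s1: "s \<noteq> 1" using bas unfolding s_def by auto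
  define r where "r = (1 - e*s)/(s-e)"
  have rd: "r*(s-e) = 1 - e*s" unfolding r_def using se by simp
  define \<rho> where "\<rho> = rhoseq a b c r"
  have \<rho>0: "\<rho> 0 = 1" and \<rho>1: "\<rho> 1 = r" unfolding \<rho>_def by simp_all
  have R: "PC a b c D \<rho>" unfolding \<rho>_def using rhoseq_rec[OF GF] by blast
  have Ak: "real (a i)*(\<sigma>(i+1)-\<sigma> i)*(\<sigma>(i-1)-\<sigma> i)*(s-e) = k*(1-e)*(\<sigma>(i+1)-s*\<sigma> i)*(\<sigma>(i-1)-s*\<sigma> i)"
    and zy: "\<sigma>(i+1) \<noteq> \<sigma> i" and xy: "\<sigma>(i-1) \<noteq> \<sigma> i"
    if i: "i \<in> {1..D-1}" for i
  proof -
    have Ai: "(\<sigma> (i + 1) - \<sigma> i) * (\<sigma> (i - 1) - \<sigma> i) \<noteq> 0" and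
      ai: "real (a i) = ((\<epsilon> - 1) * (1 - \<sigma> 2) / ((\<sigma> 1 ^ 2 - \<sigma> 2) * (1 - \<epsilon> * \<sigma> 1))) *
          ((\<sigma> (i + 1) - \<sigma> 1 * \<sigma> i) * (\<sigma> (i - 1) - \<sigma> 1 * \<sigma> i)
           / ((\<sigma> (i + 1) - \<sigma> i) * (\<sigma> (i - 1) - \<sigma> i)))"
      using condA_at[OF A i] by auto
    show zy: "\<sigma>(i+1) \<noteq> \<sigma> i" and xy: "\<sigma>(i-1) \<noteq> \<sigma> i" using Ai by auto
    show "real (a i)*(\<sigma>(i+1)-\<sigma> i)*(\<sigma>(i-1)-\<sigma> i)*(s-e) = k*(1-e)*(\<sigma>(i+1)-s*\<sigma> i)*(\<sigma>(i-1)-s*\<sigma> i)"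
      using Ak_of_A[OF bas(6) bas(1) zy xy ai] K unfolding s_def t_def e_def by simp
  qed
  have aux: "\<rho> i * (\<sigma> i - e*\<sigma>(i-1)) = \<rho>(i-1) * (\<sigma>(i-1) - e*\<sigma> i)" if "1 \<le> i" "i \<le> D" for i
    using that
  proof (induction i)
    case 0 then show ?case by simp
  next
    case (Suc i)
    show ?case
    proof (cases "i = 0")
      case True then show ?thesis using \<rho>0 \<rho>1 rd s0 unfolding s_def by (simp add: algebra_simps)
    next
      case False
      then have i: "i \<in> {1..D-1}" using Suc.prems by auto
      have IH: "\<rho> i * (\<sigma> i - e*\<sigma>(i-1)) = \<rho>(i-1) * (\<sigma>(i-1) - e*\<sigma> i)" using Suc False by auto
      obtain l where pl: "\<rho>(i-1) = l*(\<sigma> i - e*\<sigma>(i-1))" and ql: "\<rho> i = l*(\<sigma>(i-1) - e*\<sigma> i)"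
        using getl[OF e1 e2 xy[OF i] IH] by blast
      have abc: "real (a i) + real (b i) + real (c i) = k" using GF_abc[OF GF i] unfolding k_def .
      have Pi: "real (c i) * \<sigma> (i-1) + real (a i) * \<sigma> i + real (b i) * \<sigma> (i+1) = k * s * \<sigma> i"
        using PCs i unfolding k_def s_def by blast
      have Ri: "real (c i) * \<rho> (i-1) + real (a i) * \<rho> i + real (b i) * \<rho> (i+1) = k * r * \<rho> i"
        using R i \<rho>1 unfolding k_def by auto
      have bpos: "real (b i) \<noteq> 0" using GF_b[OF GF, of i] i D by force
      have wd: "(s-e)*(real (b i)*\<rho>(i+1)) = k*(1-e*s)*(l*(\<sigma>(i-1)-e*\<sigma> i)) - (s-e)*(real (c i)*(l*(\<sigma> i-e*\<sigma>(i-1))) + real (a i)*(l*(\<sigma>(i-1)-e*\<sigma> i)))"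
      proof -
        have "(s-e)*(real (b i)*\<rho>(i+1)) = k*(r*(s-e))*\<rho> i - (s-e)*(real (c i) * \<rho> (i-1) + real (a i) * \<rho> i)"
          using Ri by algebra
        then show ?thesis unfolding rd pl ql by simp
      qed
      have Aki: "real (a i)*(\<sigma>(i+1)-\<sigma> i)*(\<sigma>(i-1)-\<sigma> i)*(s-e) = k*(1-e)*(\<sigma>(i+1)-s*\<sigma> i)*(\<sigma>(i-1)-s*\<sigma> i)"
        by (rule Ak[OF i])
      have "\<rho>(i+1)*(\<sigma>(i+1)-e*\<sigma> i) = (l*(\<sigma>(i-1)-e*\<sigma> i))*(\<sigma> i-e*\<sigma>(i+1))"
        by (rule auxstep[OF abc Pi Aki se bpos zy[OF i] wd])
      then show ?thesis using ql by simp
    qed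
  qed
  have T: "PC a b c D (\<lambda>i. \<sigma> i * \<rho> i)"
  proof
    fix i assume i: "i \<in> {1..D-1}"
    have IH: "\<rho> i * (\<sigma> i - e*\<sigma>(i-1)) = \<rho>(i-1) * (\<sigma>(i-1) - e*\<sigma> i)" using aux i by auto
    obtain l where pl: "\<rho>(i-1) = l*(\<sigma> i - e*\<sigma>(i-1))" and ql: "\<rho> i = l*(\<sigma>(i-1) - e*\<sigma> i)"
      using getl[OF e1 e2 xy[OF i] IH] by blast
    have abc: "real (a i) + real (b i) + real (c i) = k" using GF_abc[OF GF i] unfolding k_def .
    have Pi: "real (c i) * \<sigma> (i-1) + real (a i) * \<sigma> i + real (b i) * \<sigma> (i+1) = k * s * \<sigma> i"
      using PCs i unfolding k_def s_def by blast
    have Ri: "real (c i) * \<rho> (i-1) + real (a i) * \<rho> i + real (b i) * \<rho> (i+1) = k * r * \<rho> i"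
      using R i \<rho>1 unfolding k_def by auto
    have wd: "(s-e)*(real (b i)*\<rho>(i+1)) = k*(1-e*s)*(l*(\<sigma>(i-1)-e*\<sigma> i)) - (s-e)*(real (c i)*(l*(\<sigma> i-e*\<sigma>(i-1))) + real (a i)*(l*(\<sigma>(i-1)-e*\<sigma> i)))"
    proof -
      have "(s-e)*(real (b i)*\<rho>(i+1)) = k*(r*(s-e))*\<rho> i - (s-e)*(real (c i) * \<rho> (i-1) + real (a i) * \<rho> i)"
        using Ri by algebra
      then show ?thesis unfolding rd pl ql by simp
    qed
    have "real (c i)*\<sigma>(i-1)*(l*(\<sigma> i-e*\<sigma>(i-1))) + real (a i)*\<sigma> i*(l*(\<sigma>(i-1)-e*\<sigma> i)) + real (b i)*\<sigma>(i+1)*\<rho>(i+1)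
        = k*s*((1-e*s)/(s-e))*\<sigma> i*(l*(\<sigma>(i-1)-e*\<sigma> i))"
      by (rule taustep[OF abc Pi Ak[OF i] se wd])
    then show "real (c i) * (\<sigma> (i-1) * \<rho> (i-1)) + real (a i) * (\<sigma> i * \<rho> i) + real (b i) * (\<sigma> (i+1) * \<rho> (i+1))
        = real (b 0) * (\<sigma> 1 * \<rho> 1) * (\<sigma> i * \<rho> i)"
      unfolding pl ql \<rho>1 r_def[symmetric] k_def[symmetric] s_def[symmetric] by (simp add: algebra_simps)
  qed
  have r1: "r \<noteq> 1"
  proof
    assume "r = 1"
    then have "(1+e)*(1-s) = 0" using rd by (simp add: algebra_simps)
    then show False using e2 s1 by (auto simp: add_eq_0_iff)
  qed
  show ?thesis unfolding tight_with_aux_def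
  proof (intro conjI exI)
    show "nontrivial_pseudo_cosine a b c D \<sigma>" unfolding nontrivial_pseudo_cosine_def using pc s1 s_def by simp
    show "nontrivial_pseudo_cosine a b c D \<rho>" unfolding nontrivial_pseudo_cosine_def using pcI \<rho>0 R \<rho>1 r1 by simp
    show "tight_pair a b c D \<sigma> \<rho>" unfolding tight_pair_def using pc pcI \<rho>0 R T s0 by simp
    show "auxiliary_parameter D \<sigma> \<rho> \<epsilon>" unfolding auxiliary_parameter_def
    proof
      fix i assume "i \<in> {1..D}"
      then have "\<rho> i * (\<sigma> i - e*\<sigma>(i-1)) = \<rho>(i-1) * (\<sigma>(i-1) - e*\<sigma> i)" using aux by auto
      then show "\<sigma> i * \<rho> i - \<sigma> (i - 1) * \<rho> (i - 1) = \<epsilon> * (\<sigma> (i - 1) * \<rho> i - \<sigma> i * \<rho> (i - 1))"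
        unfolding e_def by (simp add: algebra_simps)
    qed
  qed
qed



lemma aux_at: assumes "auxiliary_parameter D \<sigma> \<rho> \<epsilon>" "i \<in> {1..D}"
  shows "\<sigma> i * \<rho> i - \<sigma> (i - 1) * \<rho> (i - 1) = \<epsilon> * (\<sigma> (i - 1) * \<rho> i - \<sigma> i * \<rho> (i - 1))"
  using assms unfolding auxiliary_parameter_def by blast

lemma pc_at: assumes "PC a b c D \<sigma>" "i \<in> {1..D-1}"
  shows "real (c i) * \<sigma> (i-1) + real (a i) * \<sigma> i + real (b i) * \<sigma> (i+1) = real (b 0) * \<sigma> 1 * \<sigma> i"
  using assms by blast

lemma part_i_ii:
  assumes GF: "GF a b c D" and s0: "\<sigma> 0 = 1" and TW: "tight_with_aux a b c D \<sigma> \<epsilon>"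
  shows "nontrivial_pseudo_cosine a b c D \<sigma> \<and> condA a D \<sigma> \<epsilon>"
proof -
  have D: "3 \<le> D" and a0: "a 0 = 0" and c1: "c 1 = 1" and a1: "a 1 \<noteq> 0" and a2: "a 2 \<noteq> 0"
    using GF unfolding GF_def by auto
  have pcI: "\<And>\<rho>. pseudo_cosine a b c D \<rho> \<longleftrightarrow> \<rho> 0 = 1 \<and> PC a b c D \<rho>"
    by (rule pc_iff) (use D a0 in auto)
  have NT: "nontrivial_pseudo_cosine a b c D \<sigma>" using TW unfolding tight_with_aux_def by blast
  obtain \<rho> where NR: "nontrivial_pseudo_cosine a b c D \<rho>" and TP: "tight_pair a b c D \<sigma> \<rho>"
    and AP: "auxiliary_parameter D \<sigma> \<rho> \<epsilon>"
    using TW unfolding tight_with_aux_def by blast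
  have PCs: "PC a b c D \<sigma>" and PCr: "PC a b c D \<rho>" and \<rho>0: "\<rho> 0 = 1"
    and PCt: "PC a b c D (\<lambda>i. \<sigma> i * \<rho> i)"
    using TP pcI unfolding tight_pair_def by auto
  define k where "k = real (b 0)"
  define s where "s = \<sigma> 1"
  define t where "t = \<sigma> 2"
  define r where "r = \<rho> 1"
  define e where "e = \<epsilon>"
  have s1: "s \<noteq> 1" using NT unfolding nontrivial_pseudo_cosine_def s_def by simp
  have r1: "r \<noteq> 1" using NR unfolding nontrivial_pseudo_cosine_def r_def by simp
  have I1: "1 \<in> {1..D}" "2 \<in> {1..D}" "3 \<in> {1..D}" using D by auto
  have J1: "1 \<in> {1..D-1}" "2 \<in> {1..D-1}" using D by auto
  have auxi: "\<rho> i * (\<sigma> i - e*\<sigma>(i-1)) = \<rho>(i-1) * (\<sigma>(i-1) - e*\<sigma> i)" if "i \<in> {1..D}" for i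
    using aux_at[OF AP that] unfolding e_def by (simp add: algebra_simps)
  have aux1: "s*r - 1 = e*(r - s)" using aux_at[OF AP I1(1)] s0 \<rho>0 unfolding e_def s_def r_def by simp
  have aux2: "t*\<rho> 2 - s*r = e*(s*\<rho> 2 - t*r)" using aux_at[OF AP I1(2)] unfolding e_def s_def r_def t_def by simp
  have aux2': "\<rho> 2*t - r*s = (-e)*(r*t - \<rho> 2*s)" using aux2 by (simp add: algebra_simps)
  have aux3: "\<sigma> 3*\<rho> 3 - t*\<rho> 2 = e*(t*\<rho> 3 - \<sigma> 3*\<rho> 2)" using aux_at[OF AP I1(3)] unfolding e_def t_def by simp
  have aux3': "\<rho> 3*\<sigma> 3 - \<rho> 2*t = (-e)*(\<rho> 2*\<sigma> 3 - \<rho> 3*t)" using aux3 by (simp add: algebra_simps)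
  have S1: "1 + real (a 1)*s + real (b 1)*t = k*s*s" using pc_at[OF PCs J1(1)] c1 s0 unfolding k_def s_def t_def by (simp add: numeral_2_eq_2)
  have R1: "1 + real (a 1)*r + real (b 1)*\<rho> 2 = k*r*r" using pc_at[OF PCr J1(1)] c1 \<rho>0 unfolding k_def r_def by (simp add: numeral_2_eq_2)
  have S2: "real (c 2)*s + real (a 2)*t + real (b 2)*\<sigma> 3 = k*s*t" using pc_at[OF PCs J1(2)] unfolding k_def s_def t_def by simp
  have R2: "real (c 2)*r + real (a 2)*\<rho> 2 + real (b 2)*\<rho> 3 = k*r*\<rho> 2" using pc_at[OF PCr J1(2)] unfolding k_def r_def by simp
  have k1: "k = 1 + real (a 1) + real (b 1)" using GF_abc[OF GF J1(1)] c1 unfolding k_def by simp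
  have k2: "k = real (a 2) + real (b 2) + real (c 2)" using GF_abc[OF GF J1(2)] unfolding k_def by simp
  have b1: "real (b 1) > 0" and b2: "real (b 2) > 0" using GF_b[OF GF, of 1] GF_b[OF GF, of 2] D by auto
  have c2: "real (c 2) > 0" using GF_c[OF GF J1(2)] by simp
  have a1p: "real (a 1) > 0" using a1 by simp
  have e1: "e \<noteq> 1"
  proof
    assume "e = 1"
    show False by (rule eps_not_1[OF k1 a1p b1 _ _ b2 c2 S1 R1 S2 R2 aux1 aux2 aux3 s1 \<open>e = 1\<close>]) (use k2 in auto)
  qed
  have e2: "e \<noteq> -1"
  proof
    assume "e = -1"
    then have me: "-e = 1" by simp
    have aux1': "r*s - 1 = (-e)*(s - r)" using aux1 by (simp add: algebra_simps)
    show False by (rule eps_not_1[OF k1 a1p b1 _ _ b2 c2 R1 S1 R2 S2 aux1' aux2' aux3' r1 me]) (use k2 in auto)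
  qed
  have se: "s \<noteq> e"
  proof
    assume "s = e"
    then have "(s-1)*(s+1) = 0" using aux1 by (simp add: algebra_simps)
    then have "s = -1" using s1 by (auto simp: add_eq_0_iff)
    then show False using e2 \<open>s = e\<close> by simp
  qed
  have rd: "r*(s-e) = 1 - e*s" using aux1 by (simp add: algebra_simps)
  define Ak where "Ak i \<longleftrightarrow> real (a i)*(\<sigma>(i+1)-\<sigma> i)*(\<sigma>(i-1)-\<sigma> i)*(s-e) = k*(1-e)*(\<sigma>(i+1)-s*\<sigma> i)*(\<sigma>(i-1)-s*\<sigma> i)" for i
  have stepres: "Ak i \<and> \<sigma>(i+1) \<noteq> \<sigma> i \<and> (\<rho> i \<noteq> 0 \<or> \<rho>(i+1) \<noteq> 0)"
    if i: "i \<in> {1..D-1}" and xy: "\<sigma>(i-1) \<noteq> \<sigma> i" and pq: "\<rho>(i-1) \<noteq> 0 \<or> \<rho> i \<noteq> 0" for i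
  proof -
    have iD: "i \<in> {1..D}" using i by auto
    obtain l where pl: "\<rho>(i-1) = l*(\<sigma> i - e*\<sigma>(i-1))" and ql: "\<rho> i = l*(\<sigma>(i-1) - e*\<sigma> i)"
      using getl[OF e1 e2 xy auxi[OF iD]] by blast
    have l0: "l \<noteq> 0" using pq pl ql by auto
    have abc: "real (a i) + real (b i) + real (c i) = k" using GF_abc[OF GF i] unfolding k_def .
    have Pi: "real (c i) * \<sigma> (i-1) + real (a i) * \<sigma> i + real (b i) * \<sigma> (i+1) = k * s * \<sigma> i"
      using pc_at[OF PCs i] unfolding k_def s_def .
    have Ri0: "real (c i) * \<rho> (i-1) + real (a i) * \<rho> i + real (b i) * \<rho> (i+1) = k * r * \<rho> i"
      using pc_at[OF PCr i] unfolding k_def r_def .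
    have Ri: "real (c i)*(l*(\<sigma> i-e*\<sigma>(i-1))) + real (a i)*(l*(\<sigma>(i-1)-e*\<sigma> i)) + real (b i)*\<rho>(i+1) = k*r*(l*(\<sigma>(i-1)-e*\<sigma> i))"
      using Ri0 unfolding pl ql .
    have Ti0: "real (c i) * (\<sigma> (i-1) * \<rho> (i-1)) + real (a i) * (\<sigma> i * \<rho> i) + real (b i) * (\<sigma> (i+1) * \<rho> (i+1)) = k * (s * r) * (\<sigma> i * \<rho> i)"
      using pc_at[OF PCt i] unfolding k_def r_def s_def .
    have Ti: "real (c i)*\<sigma>(i-1)*(l*(\<sigma> i-e*\<sigma>(i-1))) + real (a i)*\<sigma> i*(l*(\<sigma>(i-1)-e*\<sigma> i)) + real (b i)*\<sigma>(i+1)*\<rho>(i+1) = k*s*r*\<sigma> i*(l*(\<sigma>(i-1)-e*\<sigma> i))"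
      using Ti0 unfolding pl ql by (simp add: algebra_simps)
    have a0i: "real (a i) \<ge> 0" by simp
    have bi: "real (b i) > 0" using GF_b[OF GF, of i] i D by force
    have ci: "real (c i) > 0" using GF_c[OF GF i] by simp
    note SI = stepI[OF abc Pi Ri Ti rd l0 e2 e1 se s1 a0i bi ci xy]
    have "\<rho> i \<noteq> 0 \<or> \<rho>(i+1) \<noteq> 0"
    proof (rule ccontr)
      assume "\<not> (\<rho> i \<noteq> 0 \<or> \<rho>(i+1) \<noteq> 0)"
      then have "real (c i) * \<rho> (i-1) = 0" using Ri0 by simp
      then have "\<rho>(i-1) = 0" using ci by simp
      then show False using pq \<open>\<not> (\<rho> i \<noteq> 0 \<or> \<rho>(i+1) \<noteq> 0)\<close> by simp
    qed
    then show ?thesis using SI unfolding Ak_def by simp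
  qed
  have inv: "\<sigma>(i-1) \<noteq> \<sigma> i \<and> (\<rho>(i-1) \<noteq> 0 \<or> \<rho> i \<noteq> 0)" if "1 \<le> i" "i \<le> D-1" for i
    using that
  proof (induction i)
    case 0 then show ?case by simp
  next
    case (Suc i)
    show ?case
    proof (cases "i = 0")
      case True then show ?thesis using s0 s1 \<rho>0 unfolding s_def by simp
    next
      case False
      then have i: "i \<in> {1..D-1}" using Suc.prems by auto
      have "\<sigma>(i-1) \<noteq> \<sigma> i \<and> (\<rho>(i-1) \<noteq> 0 \<or> \<rho> i \<noteq> 0)" using Suc False by auto
      then show ?thesis using stepres[OF i] by auto
    qed
  qed
  have AkI: "Ak i" and zyI: "\<sigma>(i+1) \<noteq> \<sigma> i" and xyI: "\<sigma>(i-1) \<noteq> \<sigma> i" if i: "i \<in> {1..D-1}" for i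
    using stepres[OF i] inv i by auto
  have Ak1: "real (a 1)*(t-s)*(1-s)*(s-e) = k*(1-e)*(t-s*s)*(1-s*s)"
    using AkI[OF J1(1)] s0 unfolding Ak_def s_def t_def by (simp add: numeral_2_eq_2)
  have Ak2: "real (a 2)*(\<sigma> 3-t)*(s-t)*(s-e) = k*(1-e)*(\<sigma> 3-s*t)*(s-s*t)"
    using AkI[OF J1(2)] unfolding Ak_def s_def t_def by simp
  have ts: "t \<noteq> s" using zyI[OF J1(1)] unfolding s_def t_def by (simp add: numeral_2_eq_2)
  have s3: "\<sigma> 3 \<noteq> t" using zyI[OF J1(2)] unfolding t_def by simp
  have Kk: "(1-t)*(s-e) = k*(t-s^2)*(1-e*s)" by (rule Kk_of[OF k1 S1 Ak1 s1])
  have Dn: "(s^2 - t)*(1-e*s) \<noteq> 0"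
    by (rule nondeg[OF Kk se s1 _ _ Ak1 Ak2 s3 ts]) (use a1 a2 in auto)
  have "condA a D \<sigma> \<epsilon>" unfolding condA_def
  proof (intro conjI ballI)
    show "\<epsilon> \<noteq> -1" using e2 e_def by simp
    show "(\<sigma> 1 ^ 2 - \<sigma> 2) * (1 - \<epsilon> * \<sigma> 1) \<noteq> 0" using Dn unfolding s_def t_def e_def .
    fix i assume i: "i \<in> {1..D-1}"
    show "(\<sigma> (i + 1) - \<sigma> i) * (\<sigma> (i - 1) - \<sigma> i) \<noteq> 0" using zyI[OF i] xyI[OF i] by simp
    have "real (a i) = ((e-1)*(1-t)/((s^2 - t)*(1-e*s))) * ((\<sigma>(i+1)-s*\<sigma> i)*(\<sigma>(i-1)-s*\<sigma> i)/((\<sigma>(i+1)-\<sigma> i)*(\<sigma>(i-1)-\<sigma> i)))"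
      by (rule A_of_Ak[OF Dn se zyI[OF i] xyI[OF i] _ Kk]) (use AkI[OF i] in \<open>simp add: Ak_def\<close>)
    then show "real (a i) =
          ((\<epsilon> - 1) * (1 - \<sigma> 2) / ((\<sigma> 1 ^ 2 - \<sigma> 2) * (1 - \<epsilon> * \<sigma> 1))) *
          ((\<sigma> (i + 1) - \<sigma> 1 * \<sigma> i) * (\<sigma> (i - 1) - \<sigma> 1 * \<sigma> i)
           / ((\<sigma> (i + 1) - \<sigma> i) * (\<sigma> (i - 1) - \<sigma> i)))" unfolding s_def t_def e_def .
  qed
  then show ?thesis using NT by simp
qed



theorem main_alg:
  assumes GF: "GF a b c D" and s0: "\<sigma> 0 = 1"
  shows "(tight_with_aux a b c D \<sigma> \<epsilon>
            \<longleftrightarrow> nontrivial_pseudo_cosine a b c D \<sigma> \<and> condA a D \<sigma> \<epsilon>)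
       \<and> (nontrivial_pseudo_cosine a b c D \<sigma> \<and> condA a D \<sigma> \<epsilon>
            \<longleftrightarrow> condA a D \<sigma> \<epsilon> \<and> condB b D \<sigma> \<epsilon>)
       \<and> (condA a D \<sigma> \<epsilon> \<and> condB b D \<sigma> \<epsilon>
            \<longleftrightarrow> condA a D \<sigma> \<epsilon> \<and> condC b c D \<sigma> \<epsilon>)"
proof (intro conjI)
  show "tight_with_aux a b c D \<sigma> \<epsilon> \<longleftrightarrow> nontrivial_pseudo_cosine a b c D \<sigma> \<and> condA a D \<sigma> \<epsilon>"
    using part_i_ii[where \<sigma>=\<sigma>, OF GF s0] part_ii_i[where \<sigma>=\<sigma>, OF GF s0] unfolding nontrivial_pseudo_cosine_def by blast
  show "nontrivial_pseudo_cosine a b c D \<sigma> \<and> condA a D \<sigma> \<epsilon> \<longleftrightarrow> condA a D \<sigma> \<epsilon> \<and> condB b D \<sigma> \<epsilon>"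
    using part234[where \<sigma>=\<sigma>, OF GF s0] condA_basic[where \<sigma>=\<sigma>, OF GF s0] unfolding nontrivial_pseudo_cosine_def by blast
  show "condA a D \<sigma> \<epsilon> \<and> condB b D \<sigma> \<epsilon> \<longleftrightarrow> condA a D \<sigma> \<epsilon> \<and> condC b c D \<sigma> \<epsilon>"
    using part234[where \<sigma>=\<sigma>, OF GF s0] by blast
qed



lemma adj_rel_1: "(x, y) \<in> adj_rel E ^^ 1 \<longleftrightarrow> E x y"
  by (simp add: adj_rel_def)

lemma gd_le: "(x, y) \<in> adj_rel E ^^ n \<Longrightarrow> gdist E x y \<le> n"
  unfolding gdist_def by (rule Least_le)

lemma gd_mem: "(x, y) \<in> adj_rel E ^^ n \<Longrightarrow> (x, y) \<in> adj_rel E ^^ (gdist E x y)"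
  unfolding gdist_def by (rule LeastI)

lemma gd_self: "gdist E x x = 0"
  using gd_le[where x=x and y=x and E=E and n=0] by simp

lemma gd_0: "(x, y) \<in> adj_rel E ^^ n \<Longrightarrow> gdist E x y = 0 \<Longrightarrow> x = y"
  using gd_mem[where x=x and y=y and E=E and n=n] by simp

lemma gd_tri: "(x, y) \<in> adj_rel E ^^ n \<Longrightarrow> E y z \<Longrightarrow> gdist E x z \<le> gdist E x y + 1"
proof -
  assume xy: "(x, y) \<in> adj_rel E ^^ n" and yz: "E y z"
  have "(x, z) \<in> adj_rel E ^^ Suc (gdist E x y)"
    using gd_mem[OF xy] yz by (auto simp: adj_rel_def)
  then show ?thesis using gd_le by fastforce
qed

lemma gd_reach: "(x, y) \<in> adj_rel E ^^ n \<Longrightarrow> E y z \<Longrightarrow> (x, z) \<in> adj_rel E ^^ Suc n"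
  by (auto simp: adj_rel_def)

lemma gd_1: assumes irr: "\<forall>x. \<not> E x x" and e: "E x y" shows "gdist E x y = 1"
proof -
  have r: "(x, y) \<in> adj_rel E ^^ 1" using e by (simp add: adj_rel_def)
  have "gdist E x y \<le> 1" using gd_le[OF r] .
  moreover have "gdist E x y \<noteq> 0" using gd_0[OF r] irr e by auto
  ultimately show ?thesis by simp
qed

lemma gd_1E: assumes r: "(x, y) \<in> adj_rel E ^^ n" and "gdist E x y = 1" shows "E x y"
  using gd_mem[OF r] assms(2) by (simp add: adj_rel_def)

lemma gd_last: assumes r: "(x, y) \<in> adj_rel E ^^ n" and g: "gdist E x y = Suc m"
  shows "\<exists>z. (x, z) \<in> adj_rel E ^^ m \<and> E z y \<and> gdist E x z = m"
proof -
  have "(x, y) \<in> adj_rel E ^^ Suc m" using gd_mem[OF r] g by simp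
  then obtain z where xz: "(x, z) \<in> adj_rel E ^^ m" and zy: "E z y"
    by (auto simp: adj_rel_def relpow_Suc_D2')
  have "gdist E x z \<le> m" using gd_le[OF xz] .
  moreover have "gdist E x y \<le> gdist E x z + 1" using gd_tri[OF xz zy] .
  ultimately show ?thesis using xz zy g by auto
qed


lemma drg_GF:
  fixes V :: "'v set" and E :: "'v \<Rightarrow> 'v \<Rightarrow> bool"
  assumes drg: "distance_regular V E a b c" and D3: "diameter V E \<ge> 3" and a1: "a 1 \<noteq> 0"
  shows "GF a b c (diameter V E)"
proof -
  have SG: "simple_graph V E" and CN: "graph_connected V E" using drg unfolding distance_regular_def by auto
  have fin: "finite V" and ne: "V \<noteq> {}" and inV: "\<And>x y. E x y \<Longrightarrow> x \<in> V \<and> y \<in> V"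
    and sym: "\<And>x y. E x y \<Longrightarrow> E y x" and irr: "\<forall>x. \<not> E x x"
    using SG unfolding simple_graph_def by auto
  have reach: "\<exists>n. (x, y) \<in> adj_rel E ^^ n" if "x \<in> V" "y \<in> V" for x y
    using CN that unfolding graph_connected_def by blast
  have DR: "c (gdist E x y) = card {z \<in> V. E y z \<and> gdist E x z + 1 = gdist E x y} \<and>
        a (gdist E x y) = card {z \<in> V. E y z \<and> gdist E x z = gdist E x y} \<and>
        b (gdist E x y) = card {z \<in> V. E y z \<and> gdist E x z = gdist E x y + 1}" if "x \<in> V" "y \<in> V" for x y
    using drg that unfolding distance_regular_def by blast
  have tri1: "gdist E x z \<le> gdist E x y + 1" if h: "x \<in> V" "y \<in> V" "E y z" for x y z
  proof -
    obtain n where "(x, y) \<in> adj_rel E ^^ n" using reach[OF h(1,2)] by blast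
    then show ?thesis using gd_tri h(3) by metis
  qed
  have tri2: "gdist E x y \<le> gdist E x z + 1" if "x \<in> V" "y \<in> V" "E y z" for x y z
  proof -
    have zV: "z \<in> V" using inV that(3) by blast
    show ?thesis using tri1[OF that(1) zV sym[OF that(3)]] .
  qed
  have g0: "x = z" if h: "x \<in> V" "z \<in> V" "gdist E x z = 0" for x z
  proof -
    obtain n where "(x, z) \<in> adj_rel E ^^ n" using reach[OF h(1,2)] by blast
    then show ?thesis using gd_0 h(3) by metis
  qed
  have g1: "E x z" if h: "x \<in> V" "z \<in> V" "gdist E x z = 1" for x z
  proof -
    obtain n where "(x, z) \<in> adj_rel E ^^ n" using reach[OF h(1,2)] by blast
    then show ?thesis using gd_1E h(3) by metis
  qed
  have gE: "gdist E x z = 1" if "E x z" for x z by (rule gd_1[where E=E, OF irr that])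
  define D where "D = diameter V E"
  have D3': "3 \<le> D" using D3 D_def by simp
  define S where "S = {gdist E x y | x y. x \<in> V \<and> y \<in> V}"
  have S: "S = (\<lambda>(x,y). gdist E x y) ` (V \<times> V)" unfolding S_def by auto
  have finS: "finite S" unfolding S using fin by simp
  have neS: "S \<noteq> {}" unfolding S using ne by auto
  have "D \<in> S" unfolding D_def diameter_def S_def[symmetric] using finS neS by (rule Max_in)
  then obtain x0 y0 where x0: "x0 \<in> V" and y0: "y0 \<in> V" and g00: "gdist E x0 y0 = D" unfolding S_def by blast
  have down: "\<exists>z\<in>V. gdist E x z = j" if h: "x \<in> V" "y \<in> V" "gdist E x y = m" "j \<le> m" for x y m j
    using h
  proof (induction m arbitrary: y)
    case 0 then show ?case by auto
  next
    case (Suc m)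
    show ?case
    proof (cases "j = Suc m")
      case True then show ?thesis using Suc.prems by auto
    next
      case False
      obtain n where r: "(x, y) \<in> adj_rel E ^^ n" using reach[OF Suc.prems(1,2)] by blast
      obtain z where zy: "E z y" and gz: "gdist E x z = m" using gd_last[OF r Suc.prems(3)] by blast
      have zV: "z \<in> V" using inV zy by blast
      have "j \<le> m" using Suc.prems(4) False by simp
      then show ?thesis using Suc.IH[OF Suc.prems(1) zV gz] by blast
    qed
  qed
  have exd: "\<exists>x y. x \<in> V \<and> y \<in> V \<and> gdist E x y = j" if "j \<le> D" for j
    using down[OF x0 y0 g00 that] x0 by blast
  have deg: "b 0 = card {z \<in> V. E x z}" if x: "x \<in> V" for x
  proof -
    have "b 0 = card {z \<in> V. E x z \<and> gdist E x z = 1}" using DR[OF x x] gd_self[of E x] by simp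
    also have "{z \<in> V. E x z \<and> gdist E x z = 1} = {z \<in> V. E x z}" using gE by auto
    finally show ?thesis .
  qed
  have a0: "a 0 = 0"
  proof -
    have "a 0 = card {z \<in> V. E x0 z \<and> gdist E x0 z = 0}" using DR[OF x0 x0] gd_self[of E x0] by simp
    also have "{z \<in> V. E x0 z \<and> gdist E x0 z = 0} = {}" using g0[OF x0] irr by blast
    finally show ?thesis by simp
  qed
  have c1: "c 1 = 1"
  proof -
    obtain x y where x: "x \<in> V" and y: "y \<in> V" and g: "gdist E x y = 1" using exd[of 1] D3' by auto
    have exy: "E x y" using g1[OF x y g] .
    have "c 1 = card {z \<in> V. E y z \<and> gdist E x z + 1 = 1}" using DR[OF x y] g by simp
    also have "{z \<in> V. E y z \<and> gdist E x z + 1 = 1} = {x}"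
      using g0[OF x] x sym[OF exy] gd_self[of E x] by auto
    finally show ?thesis by simp
  qed
  have abc: "a i + b i + c i = b 0" if i: "i \<in> {1..D-1}" for i
  proof -
    have iD: "i \<le> D" using i by auto
    obtain x y where x: "x \<in> V" and y: "y \<in> V" and g: "gdist E x y = i" using exd[OF iD] by blast
    define C where "C = {z \<in> V. E y z \<and> gdist E x z + 1 = i}"
    define A where "A = {z \<in> V. E y z \<and> gdist E x z = i}"
    define B where "B = {z \<in> V. E y z \<and> gdist E x z = i + 1}"
    have cab: "c i = card C" "a i = card A" "b i = card B" using DR[OF x y] g unfolding C_def A_def B_def by auto
    have un: "{z \<in> V. E y z} = C \<union> A \<union> B"
    proof
      show "{z \<in> V. E y z} \<subseteq> C \<union> A \<union> B"
      proof
        fix z assume z: "z \<in> {z \<in> V. E y z}"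
        then have "gdist E x z \<le> i + 1" "i \<le> gdist E x z + 1" using tri1[OF x y] tri2[OF x y] g by auto
        then have "gdist E x z + 1 = i \<or> gdist E x z = i \<or> gdist E x z = i + 1" by auto
        then show "z \<in> C \<union> A \<union> B" using z unfolding C_def A_def B_def by auto
      qed
      show "C \<union> A \<union> B \<subseteq> {z \<in> V. E y z}" unfolding C_def A_def B_def by auto
    qed
    have fC: "finite C" "finite A" "finite B" using fin unfolding C_def A_def B_def by auto
    have d1: "C \<inter> A = {}" unfolding C_def A_def by auto
    have d2: "(C \<union> A) \<inter> B = {}" unfolding C_def A_def B_def by auto
    have "card (C \<union> A \<union> B) = card (C \<union> A) + card B"
      by (rule card_Un_disjoint) (use fC d2 in auto)
    also have "card (C \<union> A) = card C + card A" by (rule card_Un_disjoint) (use fC d1 in auto)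
    finally have "card (C \<union> A \<union> B) = card C + card A + card B" .
    then show ?thesis using deg[OF y] un cab by simp
  qed
  have bpos: "1 \<le> b i" if i: "i < D" for i
  proof -
    obtain x y where x: "x \<in> V" and y: "y \<in> V" and g: "gdist E x y = Suc i" using exd[of "Suc i"] i by (auto simp: Suc_le_eq)
    obtain n where r: "(x, y) \<in> adj_rel E ^^ n" using reach[OF x y] by blast
    obtain z where zy: "E z y" and gz: "gdist E x z = i" using gd_last[OF r g] by blast
    have zV: "z \<in> V" using inV zy by blast
    have "b i = card {w \<in> V. E z w \<and> gdist E x w = i + 1}" using DR[OF x zV] gz by simp
    moreover have "y \<in> {w \<in> V. E z w \<and> gdist E x w = i + 1}" using y zy g by simp
    moreover have "finite {w \<in> V. E z w \<and> gdist E x w = i + 1}" using fin by simp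
    ultimately show ?thesis by (metis One_nat_def Suc_leI card_gt_0_iff empty_iff)
  qed
  have cpos: "1 \<le> c i" if i: "i \<in> {1..D-1}" for i
  proof -
    have iD: "i \<le> D" using i by auto
    obtain x y where x: "x \<in> V" and y: "y \<in> V" and g: "gdist E x y = i" using exd[OF iD] by blast
    obtain m where im: "i = Suc m" using i by (cases i) auto
    obtain n where r: "(x, y) \<in> adj_rel E ^^ n" using reach[OF x y] by blast
    obtain z where zy: "E z y" and gz: "gdist E x z = m" using gd_last[OF r g[unfolded im]] by blast
    have zV: "z \<in> V" using inV zy by blast
    have "c i = card {w \<in> V. E y w \<and> gdist E x w + 1 = i}" using DR[OF x y] g by simp
    moreover have "z \<in> {w \<in> V. E y w \<and> gdist E x w + 1 = i}" using zV sym[OF zy] gz im by simp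
    moreover have "finite {w \<in> V. E y w \<and> gdist E x w + 1 = i}" using fin by simp
    ultimately show ?thesis by (metis One_nat_def Suc_leI card_gt_0_iff empty_iff)
  qed
  have a2: "a 2 \<noteq> 0"
  proof
    assume a20: "a 2 = 0"
    have L: "E x v'" if h: "x \<in> V" "y \<in> V" "gdist E x y = 2" "E x v" "E y v" "E y v'" "E v v'" for x y v v'
    proof -
      have v'V: "v' \<in> V" using inV h(6) by blast
      have r2: "(x, v') \<in> adj_rel E ^^ 2"
      proof -
        have r1: "(x, v) \<in> adj_rel E ^^ 1" using h(4) by (simp add: adj_rel_def)
        have "(x, v') \<in> adj_rel E ^^ Suc 1" by (rule gd_reach[where E=E, OF r1 h(7)])
        then show ?thesis by (simp add: numeral_2_eq_2)
      qed
      have le2: "gdist E x v' \<le> 2" using gd_le[OF r2] .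
      have n2: "gdist E x v' \<noteq> 2"
      proof
        assume g2: "gdist E x v' = 2"
        have "a 2 = card {z \<in> V. E y z \<and> gdist E x z = 2}" using DR[OF h(1,2)] h(3) by simp
        moreover have "finite {z \<in> V. E y z \<and> gdist E x z = 2}" using fin by simp
        moreover have "v' \<in> {z \<in> V. E y z \<and> gdist E x z = 2}" using v'V h(6) g2 by simp
        ultimately show False using a20 by (metis card_0_eq empty_iff)
      qed
      have n0: "gdist E x v' \<noteq> 0"
      proof
        assume "gdist E x v' = 0"
        then have "x = v'" using g0[OF h(1) v'V] by simp
        then have "E x y" using sym[OF h(6)] by simp
        then show False using gE h(3) by simp
      qed
      have "gdist E x v' = 1" using le2 n2 n0 by linarith
      then show ?thesis using g1[OF h(1) v'V] by simp
    qed
    have "3 \<le> D" by (rule D3')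
    then obtain v z where v: "v \<in> V" and z: "z \<in> V" and g3: "gdist E v z = 3" using exd[of 3] by blast
    obtain n where r: "(v, z) \<in> adj_rel E ^^ n" using reach[OF v z] by blast
    obtain w where wz: "E w z" and gw: "gdist E v w = 2" using gd_last[OF r, of 2] g3 by auto
    have wV: "w \<in> V" using inV wz by blast
    obtain n' where r': "(v, w) \<in> adj_rel E ^^ n'" using reach[OF v wV] by blast
    obtain y where yw: "E y w" and gy: "gdist E v y = 1" using gd_last[OF r', of 1] gw by auto
    have yV: "y \<in> V" using inV yw by blast
    have vy: "E v y" using g1[OF v yV gy] .
    have "E v z"
    proof (cases "z = y")
      case True then show ?thesis using vy by simp
    next
      case zy: False
      show ?thesis
      proof (cases "E y z")
        case True
        show ?thesis by (rule L[OF v wV gw vy sym[OF yw] wz True])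
      next
        case nyz: False
        have gzy: "gdist E z y = 2"
        proof -
          have r1: "(z, w) \<in> adj_rel E ^^ 1" using sym[OF wz] by (simp add: adj_rel_def)
          have "(z, y) \<in> adj_rel E ^^ Suc 1" by (rule gd_reach[where E=E, OF r1 sym[OF yw]])
          then have "(z, y) \<in> adj_rel E ^^ 2" by (simp add: numeral_2_eq_2)
          then have "gdist E z y \<le> 2" by (rule gd_le)
          moreover have "gdist E z y \<noteq> 0" using g0[OF z yV] zy by auto
          moreover have "gdist E z y \<noteq> 1" using g1[OF z yV] nyz sym by auto
          ultimately show ?thesis by linarith
        qed
        have "a 1 = card {p \<in> V. E w p \<and> gdist E y p = 1}"
          using DR[OF yV wV] gE[OF yw] by simp
        then have "{p \<in> V. E w p \<and> gdist E y p = 1} \<noteq> {}" using a1 by (metis card.empty)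
        then obtain p where pV: "p \<in> V" and wp: "E w p" and gp: "gdist E y p = 1" by blast
        have yp: "E y p" using g1[OF yV pV gp] .
        have zp: "E z p" by (rule L[OF z yV gzy sym[OF wz] yw yp wp])
        have vp: "E v p" by (rule L[OF v wV gw vy sym[OF yw] wp yp])
        show ?thesis by (rule L[OF v wV gw vp wp wz sym[OF zp]])
      qed
    qed
    then show False using gE g3 by simp
  qed
  show ?thesis unfolding GF_def D_def[symmetric]
    using D3' a0 c1 a1 a2 abc bpos cpos by auto
qed

theorem theorem14p2:
  fixes V :: "'v set" and E :: "'v \<Rightarrow> 'v \<Rightarrow> bool"
    and a b c :: "nat \<Rightarrow> nat" and \<sigma> :: "nat \<Rightarrow> real" and \<epsilon> :: real
  assumes drg: "distance_regular V E a b c"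
    and D3: "diameter V E \<ge> 3"
    and a1: "a 1 \<noteq> 0"
    and s0: "\<sigma> 0 = 1"
  shows "(tight_with_aux a b c (diameter V E) \<sigma> \<epsilon>
            \<longleftrightarrow> nontrivial_pseudo_cosine a b c (diameter V E) \<sigma> \<and> condA a (diameter V E) \<sigma> \<epsilon>)
       \<and> (nontrivial_pseudo_cosine a b c (diameter V E) \<sigma> \<and> condA a (diameter V E) \<sigma> \<epsilon>
            \<longleftrightarrow> condA a (diameter V E) \<sigma> \<epsilon> \<and> condB b (diameter V E) \<sigma> \<epsilon>)
       \<and> (condA a (diameter V E) \<sigma> \<epsilon> \<and> condB b (diameter V E) \<sigma> \<epsilon>
            \<longleftrightarrow> condA a (diameter V E) \<sigma> \<epsilon> \<and> condC b c (diameter V E) \<sigma> \<epsilon>)"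
proof -
  have GF: "GF a b c (diameter V E)" by (rule drg_GF[OF drg D3 a1])
  show ?thesis by (rule main_alg[where \<sigma>=\<sigma>, OF GF s0])
qed

end
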